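(* Let $\mathcal{O}$ be any finite set of regular control flow operations (possibly including the operations of GKAT: if-then-else, sequential composition, while-do). Then there exists $k>0$ such that the guarded language $L_k$ is not generated by $\mathcal{O}$.
   Context: Guarded strings and languages. For finite sets $T$ (primitive tests) and $\Sigma$ (primitive actions), the Boolean expressions $\mathsf{BA}(T)$ are generated by $b ::= \mathsf{false}\mid\mathsf{true}\mid t\ (t\in T)\mid b\vee c\mid b\wedge c\mid \overline{b}$. Atoms are $\mathsf{At}_T=2^T$; for $\alpha\in\mathsf{At}_T$, $\alpha\le b$ means $b$ is true under the truth assignment making exactly the tests in $\alpha$ true. KAT expressions $\mathsf{KAT}(\Sigma,T)$: $e::= b\in\mathsf{BA}(T)\mid p\in\Sigma\mid e+f\mid e\cdot f\mid e^*$. A guarded string is a word in $\mathsf{At}_T(\Sigma\,\mathsf{At}_T)^*$; a guarded language is a set of guarded strings. If $w=w'\alpha$ and $x=\alpha x'$, then $w\diamond x=w'\alpha x'$; for guarded languages, $L\diamond K=\{w\diamond x: w\in L,x\in K, w\diamond x\text{ defined}\}$, $L^{(0)}=\mathsf{At}_T$, $L^{(n+1)}=L\diamond L^{(n)}$, $L^{( * )}=\bigcup_n L^{(n)}$. The language of a KAT expression: $L(b)=\{\alpha:\alpha\le b\}$, $L(p)=\{\alpha p\beta:\alpha,\beta\in\mathsf{At}_T\}$, $L(e+f)=L(e)\cup L(f)$, $L(ef)=L(e)\diamond L(f)$, $L(e^* )=L(e)^{( * )}$. $\mathcal{G}(\Sigma,T)$ denotes the set of guarded languages that are regular (as languages over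 the finite alphabet $\mathsf{At}_T\cup\Sigma$). A guarded language $L$ is deterministic if for all distinct $w,w'\in L$: (i) $w$ is not a proper prefix of $w'$, and (ii) the first position where $w$ and $w'$ differ is an atom. Substitution. Given maps $\mathfrak{s}:\Sigma_0\to\mathcal{G}(\Sigma_1,T_1)$ and $\mathfrak{t}:T_0\to\mathsf{BA}(T_1)$: an atom $\beta\in\mathsf{At}_{T_1}$ is $\mathfrak{t}$-consistent with $\alpha\in\mathsf{At}_{T_0}$ if for all $t\in T_0$, $\alpha\le t$ iff $\beta\le\mathfrak{t}(t)$. For $L$ over $(\Sigma_0,T_0)$, $\mathrm{apply}_{\mathfrak{t}}(L)$ is the set of $\beta_0p_0\beta_1\cdots p_{n-1}\beta_n$ such that some $\alpha_0p_0\alpha_1\cdots p_{n-1}\alpha_n\in L$ has each $\beta_i$ $\mathfrak{t}$-consistent with $\alpha_i$. For $L$ over $(\Sigma_0,T_1)$, $\mathrm{apply}^{\mathfrak{s}}(L)$ is the set of all $\alpha_0\diamond w_0\diamond\alpha_1\diamond\cdots\diamond w_{n-1}\diamond\alpha_n$ with $\alpha_0p_0\alpha_1\cdots p_{n-1}\alpha_n\in L$ and $w_i\in\mathfrak{s}(p_i)$. Put $\mathrm{apply}^{\mathfrak{s}}_{\mathfrak{t}}=\mathrm{apply}^{\mathfrak{s}}\circ\mathrm{apply}_{\mathfrak{t}}$. Regular control flow operations. For $e\in\mathsf{KAT}(\{x_1,\dots,x_n\},\{y_1,\dots,y_m\})$, $O_e$ is the $(n+m)$-ary operation which, for any finite $\Sigma,T$,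 takes $L_1,\dots,L_n\in\mathcal{G}(\Sigma,T)$ and $b_1,\dots,b_m\in\mathsf{BA}(T)$ and returns $\mathrm{apply}^{\mathfrak{s}}_{\mathfrak{t}}(L(e))$ where $\mathfrak{s}(x_i)=L_i$, $\mathfrak{t}(y_i)=b_i$. If $L(e)$ is deterministic, $O_e$ is called a (deterministic) regular control flow operation. A set $\mathcal{O}$ of such operations generates $L\in\mathcal{G}(\Sigma,T)$ if $L$ belongs to the smallest set of guarded languages containing $L(p)$ for all $p\in\Sigma$ and $L(b)$ for all $b\in\mathsf{BA}(T)$ and closed under: if $O_e\in\mathcal{O}$ has $n$ language and $m$ test parameters, $L_1,\dots,L_n$ are in the set and $b_1,\dots,b_m\in\mathsf{BA}(T)$, then $O_e(L_1,\dots,L_n,b_1,\dots,b_m)$ is in the set. The language $L_k$ ($k>0$): $T=\{t_1,\dots,t_k\}$, $\Sigma=\{p_1,\dots,p_k\}$, $\alpha_i=\{t_i\}\in\mathsf{At}_T$. $L_k$ consists of all guarded strings $\alpha_{i_1}\,p_1\,\alpha_{i_2}\,p_{i_1}\,\alpha_{i_3}\,p_{i_2}\cdots\alpha_{i_n}\,p_{i_{n-1}}\,\alpha_{i_n}$ with $n\ge1$, each $i_j\in\{1,\dots,k\}$, $i_1\ne1$, and $i_j\ne i_{j+1}$ for all $j<n$ (i.e. the $j$-th atom $\alpha_{i_j}$, $j\le n$, is followed by action $p_{i_{j-1}}$ with $i_0=1$, and the string ends with the atom $\alpha_{i_n}$ repeated). *)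

theory Defs
  imports Main
begin

datatype 't bexp = BFalse | BTrue | BTest 't | BOr "'t bexp" "'t bexp"
  | BAnd "'t bexp" "'t bexp" | BNot "'t bexp"

(* alpha <= b : b is true under the assignment making exactly the tests in alpha true *)
fun beval :: "'t set \<Rightarrow> 't bexp \<Rightarrow> bool" where
  "beval \<alpha> BFalse = False"
| "beval \<alpha> BTrue = True"
| "beval \<alpha> (BTest t) = (t \<in> \<alpha>)"
| "beval \<alpha> (BOr b c) = (beval \<alpha> b \<or> beval \<alpha> c)"
| "beval \<alpha> (BAnd b c) = (beval \<alpha> b \<and> beval \<alpha> c)"
| "beval \<alpha> (BNot b) = (\<not> beval \<alpha> b)"

fun btests :: "'t bexp \<Rightarrow> 't set" where
  "btests BFalse = {}"
| "btests BTrue = {}"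
| "btests (BTest t) = {t}"
| "btests (BOr b c) = btests b \<union> btests c"
| "btests (BAnd b c) = btests b \<union> btests c"
| "btests (BNot b) = btests b"

datatype ('p, 't) kat = KTest "'t bexp" | KAct 'p | KPlus "('p,'t) kat" "('p,'t) kat"
  | KSeq "('p,'t) kat" "('p,'t) kat" | KStar "('p,'t) kat"

fun kacts :: "('p,'t) kat \<Rightarrow> 'p set" where
  "kacts (KTest b) = {}"
| "kacts (KAct p) = {p}"
| "kacts (KPlus e f) = kacts e \<union> kacts f"
| "kacts (KSeq e f) = kacts e \<union> kacts f"
| "kacts (KStar e) = kacts e"

fun ktests :: "('p,'t) kat \<Rightarrow> 't set" where
  "ktests (KTest b) = btests b"
| "ktests (KAct p) = {}"
| "ktests (KPlus e f) = ktests e \<union> ktests f"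
| "ktests (KSeq e f) = ktests e \<union> ktests f"
| "ktests (KStar e) = ktests e"

text \<open>Letters of the alphabet At_T \<union> Sigma; an atom is a subset of T.
  A guarded string is a word (list of letters) of the shape alpha0 p0 alpha1 ... p(n-1) alpha_n.\<close>

datatype ('p, 't) gsym = GAt "'t set" | GAct 'p

type_synonym ('p, 't) gstring = "('p, 't) gsym list"
type_synonym ('p, 't) glang = "('p, 't) gstring set"

fun is_gs :: "'p set \<Rightarrow> 't set \<Rightarrow> ('p,'t) gstring \<Rightarrow> bool" where
  "is_gs S T [GAt a] = (a \<subseteq> T)"
| "is_gs S T (GAt a # GAct p # w) = (a \<subseteq> T \<and> p \<in> S \<and> is_gs S T w)"
| "is_gs S T _ = False"

definition atoms :: "'t set \<Rightarrow> ('p,'t) glang" where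
  "atoms T = {[GAt a] | a. a \<subseteq> T}"

(* w \<diamond> x for w = w' alpha, x = alpha x' is w' alpha x' = butlast w @ x *)
definition gdiam :: "('p,'t) glang \<Rightarrow> ('p,'t) glang \<Rightarrow> ('p,'t) glang" where
  "gdiam L K = {butlast w @ x | w x. w \<in> L \<and> x \<in> K \<and> w \<noteq> [] \<and> x \<noteq> [] \<and> last w = hd x}"

fun gpow :: "'t set \<Rightarrow> ('p,'t) glang \<Rightarrow> nat \<Rightarrow> ('p,'t) glang" where
  "gpow T L 0 = atoms T"
| "gpow T L (Suc n) = gdiam L (gpow T L n)"

definition gstar :: "'t set \<Rightarrow> ('p,'t) glang \<Rightarrow> ('p,'t) glang" where
  "gstar T L = (\<Union>n. gpow T L n)"

fun langK :: "'t set \<Rightarrow> ('p,'t) kat \<Rightarrow> ('p,'t) glang" where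
  "langK T (KTest b) = {[GAt a] | a. a \<subseteq> T \<and> beval a b}"
| "langK T (KAct p) = {[GAt a, GAct p, GAt b] | a b. a \<subseteq> T \<and> b \<subseteq> T}"
| "langK T (KPlus e f) = langK T e \<union> langK T f"
| "langK T (KSeq e f) = gdiam (langK T e) (langK T f)"
| "langK T (KStar e) = gstar T (langK T e)"

definition regular_over :: "'a set \<Rightarrow> 'a list set \<Rightarrow> bool" where
  "regular_over A L \<longleftrightarrow>
     (\<exists>(Q :: nat set) q0 \<delta> F. finite Q \<and> q0 \<in> Q \<and> (\<forall>q\<in>Q. \<forall>a\<in>A. \<delta> q a \<in> Q) \<and> F \<subseteq> Q \<and>
        L = {w. set w \<subseteq> A \<and> foldl \<delta> q0 w \<in> F})"

definition Greg :: "'p set \<Rightarrow> 't set \<Rightarrow> ('p,'t) glang set" where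
  "Greg S T = {L. (\<forall>w\<in>L. is_gs S T w) \<and>
      regular_over ({GAt a | a. a \<subseteq> T} \<union> GAct ` S) L}"

definition deterministic :: "('p,'t) glang \<Rightarrow> bool" where
  "deterministic L \<longleftrightarrow> (\<forall>w\<in>L. \<forall>w'\<in>L. w \<noteq> w' \<longrightarrow>
      (\<nexists>u. u \<noteq> [] \<and> w' = w @ u) \<and>
      (\<forall>i. i < length w \<and> i < length w' \<and> take i w = take i w' \<and> w ! i \<noteq> w' ! i \<longrightarrow>
           (\<exists>a. w ! i = GAt a) \<and> (\<exists>a. w' ! i = GAt a)))"

definition tconsistent :: "'t0 set \<Rightarrow> ('t0 \<Rightarrow> 't1 bexp) \<Rightarrow> 't0 set \<Rightarrow> 't1 set \<Rightarrow> bool" where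
  "tconsistent T0 tt \<alpha> \<beta> \<longleftrightarrow> (\<forall>t\<in>T0. t \<in> \<alpha> \<longleftrightarrow> beval \<beta> (tt t))"

fun tsym_rel :: "'t0 set \<Rightarrow> 't1 set \<Rightarrow> ('t0 \<Rightarrow> 't1 bexp) \<Rightarrow> ('p,'t0) gsym \<Rightarrow> ('p,'t1) gsym \<Rightarrow> bool" where
  "tsym_rel T0 T1 tt (GAt \<alpha>) (GAt \<beta>) = (\<beta> \<subseteq> T1 \<and> tconsistent T0 tt \<alpha> \<beta>)"
| "tsym_rel T0 T1 tt (GAct p) (GAct q) = (p = q)"
| "tsym_rel T0 T1 tt _ _ = False"

definition apply_t :: "'t0 set \<Rightarrow> 't1 set \<Rightarrow> ('t0 \<Rightarrow> 't1 bexp) \<Rightarrow> ('p,'t0) glang \<Rightarrow> ('p,'t1) glang" where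
  "apply_t T0 T1 tt L = {w'. \<exists>w\<in>L. list_all2 (tsym_rel T0 T1 tt) w w'}"

(* alpha0 \<diamond> w0 \<diamond> alpha1 \<diamond> ... \<diamond> w(n-1) \<diamond> alpha_n with w_i \<in> s(p_i) *)
fun subst_gs :: "('p0 \<Rightarrow> ('p1,'t) glang) \<Rightarrow> ('p0,'t) gstring \<Rightarrow> ('p1,'t) glang" where
  "subst_gs s [GAt a] = {[GAt a]}"
| "subst_gs s (GAt a # GAct p # w) = gdiam (gdiam {[GAt a]} (s p)) (subst_gs s w)"
| "subst_gs s _ = {}"

definition apply_s :: "('p0 \<Rightarrow> ('p1,'t) glang) \<Rightarrow> ('p0,'t) glang \<Rightarrow> ('p1,'t) glang" where
  "apply_s s L = (\<Union>w\<in>L. subst_gs s w)"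

text \<open>An operation is coded as (n, m, e) with e a KAT expression whose action variables are
  x_i = i for i < n and whose test variables are y_j = j for j < m.\<close>

type_synonym opcode = "nat \<times> nat \<times> (nat, nat) kat"

definition rcfo :: "opcode \<Rightarrow> bool" where
  "rcfo c = (case c of (n, m, e) \<Rightarrow>
     kacts e \<subseteq> {0..<n} \<and> ktests e \<subseteq> {0..<m} \<and> deterministic (langK {0..<m} e))"

definition op_apply :: "'t set \<Rightarrow> opcode \<Rightarrow> ('p,'t) glang list \<Rightarrow> 't bexp list \<Rightarrow> ('p,'t) glang" where
  "op_apply T c Ls bs = (case c of (n, m, e) \<Rightarrow>
     apply_s (\<lambda>i. Ls ! i) (apply_t {0..<m} T (\<lambda>j. bs ! j) (langK {0..<m} e)))"

inductive_set generated :: "'p set \<Rightarrow> 't set \<Rightarrow> opcode set \<Rightarrow> ('p,'t) glang set"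
  for S :: "'p set" and T :: "'t set" and Ops :: "opcode set" where
  gen_act: "p \<in> S \<Longrightarrow> langK T (KAct p) \<in> generated S T Ops"
| gen_test: "btests b \<subseteq> T \<Longrightarrow> langK T (KTest b) \<in> generated S T Ops"
| gen_op: "(n, m, e) \<in> Ops \<Longrightarrow> length Ls = n \<Longrightarrow> (\<forall>L\<in>set Ls. L \<in> generated S T Ops \<and> L \<in> Greg S T) \<Longrightarrow> length bs = m \<Longrightarrow> (\<forall>b\<in>set bs. btests b \<subseteq> T) \<Longrightarrow>
      op_apply T (n, m, e) Ls bs \<in> generated S T Ops"

text \<open>T = {t_1..t_k} and Sigma = {p_1..p_k} are represented by {1..k}; alpha_i = {i}.\<close>

fun lk_word :: "nat \<Rightarrow> nat list \<Rightarrow> (nat, nat) gstring" where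
  "lk_word prev [] = []"
| "lk_word prev [i] = [GAt {i}, GAct prev, GAt {i}]"
| "lk_word prev (i # j # is) = GAt {i} # GAct prev # lk_word i (j # is)"

definition Lk :: "nat \<Rightarrow> (nat, nat) glang" where
  "Lk k = {lk_word 1 is | is. is \<noteq> [] \<and> set is \<subseteq> {1..k} \<and> hd is \<noteq> 1 \<and>
            (\<forall>j. Suc j < length is \<longrightarrow> is ! j \<noteq> is ! Suc j)}"

end

theory Submission
  imports Defs
begin

definition diverge :: "('p,'t) gstring \<Rightarrow> ('p,'t) gstring \<Rightarrow> bool" where
  "diverge w w' \<longleftrightarrow> (\<exists>q a a' s s'. a \<noteq> a' \<and> w = q @ GAt a # s \<and> w' = q @ GAt a' # s')"

definition det' :: "('p,'t) glang \<Rightarrow> bool" where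
  "det' L \<longleftrightarrow> (\<forall>w\<in>L. \<forall>w'\<in>L. w \<noteq> w' \<longrightarrow> diverge w w')"

lemma first_diff:
  "w \<noteq> w' \<Longrightarrow> (\<exists>z. w' = w @ z \<and> z \<noteq> []) \<or> (\<exists>z. w = w' @ z \<and> z \<noteq> []) \<or>
     (\<exists>q x x' s s'. x \<noteq> x' \<and> w = q @ x # s \<and> w' = q @ x' # s')"
proof (induction w arbitrary: w')
  case Nil then show ?case by auto
next
  case (Cons a w)
  show ?case
  proof (cases w')
    case Nil then show ?thesis by auto
  next
    case (Cons b w'')
    show ?thesis
    proof (cases "a = b")
      case True
      with Cons.prems Cons have "w \<noteq> w''" by auto
      from Cons.IH[OF this] show ?thesis
      proof (elim disjE exE conjE)
        fix z assume "w'' = w @ z" "z \<noteq> []" then show ?thesis using Cons True by auto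
      next
        fix z assume "w = w'' @ z" "z \<noteq> []" then show ?thesis using Cons True by auto
      next
        fix q x x' s s' assume "x \<noteq> x'" "w = q @ x # s" "w'' = q @ x' # s'"
        then show ?thesis using Cons True by (intro disjI2) (rule exI[of _ "a # q"], auto)
      qed
    next
      case False
      then show ?thesis using Cons by (intro disjI2) (rule exI[of _ "[]"], auto)
    qed
  qed
qed

lemma deterministic_det': "deterministic L \<Longrightarrow> det' L"
  unfolding det'_def
proof (intro ballI impI)
  fix w w' assume d: "deterministic L" and w: "w \<in> L" and w': "w' \<in> L" and ne: "w \<noteq> w'"
  from d w w' ne have np1: "\<nexists>u. u \<noteq> [] \<and> w' = w @ u" and
    np2: "\<nexists>u. u \<noteq> [] \<and> w = w' @ u" unfolding deterministic_def by metis+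
  from first_diff[OF ne] np1 np2 obtain q x x' s s' where
    xx: "x \<noteq> x'" "w = q @ x # s" "w' = q @ x' # s'" by blast
  let ?i = "length q"
  have "?i < length w" "?i < length w'" "take ?i w = take ?i w'" "w ! ?i \<noteq> w' ! ?i"
    using xx by auto
  with d w w' ne have "(\<exists>a. w ! ?i = GAt a) \<and> (\<exists>a. w' ! ?i = GAt a)"
    unfolding deterministic_def by blast
  then obtain a a' where "x = GAt a" "x' = GAt a'" using xx by auto
  then show "diverge w w'" unfolding diverge_def using xx by blast
qed

lemma diverge_app: "diverge x y \<Longrightarrow> diverge (p @ x) (p @ y)"
proof -
  assume "diverge x y"
  then obtain q a a' s s' where "a \<noteq> a'" "x = q @ GAt a # s" "y = q @ GAt a' # s'"
    unfolding diverge_def by blast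
  then show ?thesis unfolding diverge_def by (intro exI[of _ "p @ q"]) auto
qed

lemma diverge_app2: "diverge x y \<Longrightarrow> diverge (x @ z) (y @ z')"
proof -
  assume "diverge x y"
  then obtain q a a' s s' where "a \<noteq> a'" "x = q @ GAt a # s" "y = q @ GAt a' # s'"
    unfolding diverge_def by blast
  then show ?thesis unfolding diverge_def by (intro exI[of _ q]) auto
qed

lemma det'_prefix: "det' L \<Longrightarrow> w \<in> L \<Longrightarrow> w @ z \<in> L \<Longrightarrow> z \<noteq> [] \<Longrightarrow> False"
proof -
  assume d: "det' L" and a: "w \<in> L" "w @ z \<in> L" "z \<noteq> []"
  then have "diverge w (w @ z)" unfolding det'_def by auto
  then obtain q b b' s s' where q: "b \<noteq> b'" "w = q @ GAt b # s" "w @ z = q @ GAt b' # s'"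
    unfolding diverge_def by blast
  then have "(w @ z) ! length q = GAt b" by (simp add: nth_append)
  with q show False by simp
qed

lemma det'_act: "det' L \<Longrightarrow> p @ GAct x # r1 \<in> L \<Longrightarrow> p @ GAct y # r2 \<in> L \<Longrightarrow> x \<noteq> y \<Longrightarrow> False"
proof -
  assume d: "det' L" and a: "p @ GAct x # r1 \<in> L" "p @ GAct y # r2 \<in> L" "x \<noteq> y"
  then have "diverge (p @ GAct x # r1) (p @ GAct y # r2)" unfolding det'_def by auto
  then obtain q b b' s s' where q: "b \<noteq> b'" "p @ GAct x # r1 = q @ GAt b # s"
     "p @ GAct y # r2 = q @ GAt b' # s'"
    unfolding diverge_def by blast
  consider "length q < length p" | "length q = length p" | "length q > length p" by linarith
  then show False
  proof cases
    case 1
    have "(p @ GAct x # r1) ! length q = (p @ GAct y # r2) ! length q" using 1 by (simp add: nth_append)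
    then show False using q by (simp add: nth_append)
  next
    case 2
    have "(p @ GAct x # r1) ! length q = GAct x" using 2 by (simp add: nth_append)
    then show False using q by (simp add: nth_append)
  next
    case 3
    have "(p @ GAct x # r1) ! length p = (q @ GAt b # s) ! length p" using q by simp
    moreover have "(p @ GAct y # r2) ! length p = (q @ GAt b' # s') ! length p" using q by simp
    ultimately have "GAct x = q ! length p" "GAct y = q ! length p" using 3 by (simp_all add: nth_append)
    then show False using a(3) by (metis gsym.inject(2))
  qed
qed

lemma det'_resid: "det' L \<Longrightarrow> det' {z. p @ z \<in> L}"
  unfolding det'_def
proof (intro ballI impI)
  fix w w' assume d: "\<forall>w\<in>L. \<forall>w'\<in>L. w \<noteq> w' \<longrightarrow> diverge w w'" and
    w: "w \<in> {z. p @ z \<in> L}" and w': "w' \<in> {z. p @ z \<in> L}" and ne: "w \<noteq> w'"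
  then have "diverge (p @ w) (p @ w')" by auto
  then obtain q a a' s s' where q: "a \<noteq> a'" "p @ w = q @ GAt a # s" "p @ w' = q @ GAt a' # s'"
    unfolding diverge_def by blast
  show "diverge w w'"
  proof (cases "length q < length p")
    case True
    have "(p @ w) ! length q = (p @ w') ! length q" using True by (simp add: nth_append)
    then show ?thesis using q by (simp add: nth_append)
  next
    case False
    then obtain q' where "q = p @ q'"
      using q(2) by (metis append_eq_append_conv_if append_take_drop_id le_eq_less_or_eq linorder_not_le length_append)
    then show ?thesis using q unfolding diverge_def by auto
  qed
qed

lemma det'_empty: "det' {}" unfolding det'_def by auto

lemma is_gs_ne: "is_gs S T w \<Longrightarrow> w \<noteq> [] \<and> (\<exists>a. hd w = GAt a \<and> a \<subseteq> T) \<and> (\<exists>a. last w = GAt a \<and> a \<subseteq> T)"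
  by (induction S T w rule: is_gs.induct) auto

lemma is_gs_diam: "is_gs S T w \<Longrightarrow> is_gs S T x \<Longrightarrow> last w = hd x \<Longrightarrow> is_gs S T (butlast w @ x)"
proof (induction S T w rule: is_gs.induct)
  case (1 S T a)
  then show ?case using is_gs_ne[of S T x] by (cases x) auto
next
  case (2 S T a p w)
  then have "w \<noteq> []" using is_gs_ne by auto
  then obtain z w' where "w = z # w'" by (cases w) auto
  then show ?case using 2 by (cases w') auto
qed simp_all

lemma is_gs_mono: "is_gs S T w \<Longrightarrow> S \<subseteq> S' \<Longrightarrow> is_gs S' T w"
  by (induction S T w rule: is_gs.induct) auto

lemma is_gs_act: "is_gs S T w \<Longrightarrow> GAct p \<in> set w \<Longrightarrow> p \<in> S"
  by (induction S T w rule: is_gs.induct) auto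

lemma is_gs_atom: "is_gs S T w \<Longrightarrow> GAt a \<in> set w \<Longrightarrow> a \<subseteq> T"
  by (induction S T w rule: is_gs.induct) auto

lemma is_gs_long: "is_gs S T w \<Longrightarrow> length w \<noteq> 1 \<Longrightarrow> \<exists>a p w'. w = GAt a # GAct p # w' \<and> is_gs S T w'"
proof -
  assume g: "is_gs S T w" and l: "length w \<noteq> 1"
  obtain x r where w: "w = x # r" using g by (cases w) simp_all
  then obtain y r' where r: "r = y # r'" using l by (cases r) simp_all
  show ?thesis using g unfolding w r by (cases x; cases y) simp_all
qed

lemma is_gs_suffix: "is_gs S T (v @ y) \<Longrightarrow> v \<noteq> [] \<Longrightarrow> last v = GAct p \<Longrightarrow> is_gs S T y"
proof (induction v rule: length_induct)
  case (1 v)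
  obtain a v' where va: "v = a # v'" using 1(3) by (cases v) auto
  show ?case
  proof (cases v')
    case Nil 
    then have "v @ y = GAct p # y" using va 1(4) by simp
    then show ?thesis using 1(2) by simp
  next
    case (Cons b v'')
    have "length (v @ y) \<noteq> 1" using va Cons by simp
    then obtain a' p' w' where e: "v @ y = GAt a' # GAct p' # w'" "is_gs S T w'"
      using is_gs_long[OF 1(2)] by blast
    have ww: "w' = v'' @ y" using e(1) va Cons by simp
    show ?thesis
    proof (cases "v'' = []")
      case True then show ?thesis using e(2) ww by simp
    next
      case False
      have lt: "length v'' < length v" using va Cons by simp
      have "last v'' = GAct p" using 1(4) va Cons False by simp
      then show ?thesis using 1(1) lt e(2) ww False by blast
    qed
  qed
qed

lemma is_gs_odd: "is_gs S T w \<Longrightarrow> odd (length w)"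
  by (induction S T w rule: is_gs.induct) simp_all

lemma gdiam_iff: "w \<in> gdiam L K \<longleftrightarrow> (\<exists>x y. w = butlast x @ y \<and> x \<in> L \<and> y \<in> K \<and> x \<noteq> [] \<and> y \<noteq> [] \<and> last x = hd y)"
  unfolding gdiam_def by blast

lemma gdiam_gs: "\<forall>w\<in>L. is_gs S T w \<Longrightarrow> \<forall>w\<in>K. is_gs S T w \<Longrightarrow> w \<in> gdiam L K \<Longrightarrow> is_gs S T w"
  unfolding gdiam_iff using is_gs_diam by blast

lemma gpow_gs: "\<forall>w\<in>L. is_gs S T w \<Longrightarrow> w \<in> gpow T L n \<Longrightarrow> is_gs S T w"
proof (induction n arbitrary: w)
  case 0 then show ?case by (auto simp: atoms_def)
next
  case (Suc n)
  then show ?case using gdiam_gs[of L S T "gpow T L n"] by auto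
qed

lemma langK_gs: "w \<in> langK T e \<Longrightarrow> is_gs (kacts e) T w"
proof (induction e arbitrary: w)
  case (KTest b) then show ?case by auto
next
  case (KAct p) then show ?case by auto
next
  case (KPlus e f)
  then show ?case using is_gs_mono[of _ T _ "kacts (KPlus e f)"] by fastforce
next
  case (KSeq e f)
  have "\<forall>w\<in>langK T e. is_gs (kacts (KSeq e f)) T w" using KSeq.IH(1) is_gs_mono by fastforce
  moreover have "\<forall>w\<in>langK T f. is_gs (kacts (KSeq e f)) T w" using KSeq.IH(2) is_gs_mono by fastforce
  ultimately show ?case using gdiam_gs KSeq.prems by auto
next
  case (KStar e)
  then show ?case using gpow_gs[of "langK T e" "kacts e" T] by (auto simp: gstar_def)
qed

definition paths :: "nat \<Rightarrow> nat \<Rightarrow> nat list set" where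
  "paths k i0 = {xs. xs \<noteq> [] \<and> set xs \<subseteq> {1..k} \<and> hd xs \<noteq> i0 \<and> (\<forall>j. Suc j < length xs \<longrightarrow> xs ! j \<noteq> xs ! Suc j)}"

lemma lk_word_ne: "xs \<noteq> [] \<Longrightarrow> lk_word p xs \<noteq> []"
  by (cases "(p, xs)" rule: lk_word.cases) auto

lemma lk_word_app: "xs \<noteq> [] \<Longrightarrow> \<sigma> \<noteq> [] \<Longrightarrow> lk_word p (xs @ \<sigma>) = butlast (lk_word p xs) @ lk_word (last xs) \<sigma>"
proof (induction "xs" arbitrary: p)
  case Nil then show ?case by simp
next
  case (Cons i xs')
  show ?case
  proof (cases xs')
    case Nil
    then show ?thesis using Cons by (cases \<sigma>) auto
  next
    case (Cons j xs'')
    then have "lk_word p (i # xs' @ \<sigma>) = GAt {i} # GAct p # lk_word i (xs' @ \<sigma>)" by simp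
    moreover have "lk_word p (i # xs') = GAt {i} # GAct p # lk_word i xs'" using Cons by simp
    ultimately show ?thesis using Cons.IH[of i] Cons.prems Cons lk_word_ne[of xs' i] by auto
  qed
qed

lemma lk_word_last: "xs \<noteq> [] \<Longrightarrow> lk_word p xs = butlast (lk_word p xs) @ [GAt {last xs}]"
proof (induction p "xs" rule: lk_word.induct)
  case (3 prev i j xs)
  then show ?case by (auto simp: lk_word_ne)
qed auto

lemma lk_word_butlast: "xs \<noteq> [] \<Longrightarrow> \<exists>z q. butlast (lk_word p xs) = z @ [GAt {last xs}, GAct q]"
proof (induction p "xs" rule: lk_word.induct)
  case (2 prev i)
  then show ?case by auto
next
  case (3 prev i j xs)
  then obtain z q where "butlast (lk_word i (j # xs)) = z @ [GAt {last (j # xs)}, GAct q]" by blast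
  then show ?case using lk_word_ne[of "j # xs" i] by (intro exI[of _ "GAt {i} # GAct prev # z"]) auto
qed auto

lemma lk_word_snoc: "xs \<noteq> [] \<Longrightarrow> lk_word p (xs @ [l]) = butlast (lk_word p xs) @ [GAt {l}, GAct (last xs), GAt {l}]"
  using lk_word_app[of "xs" "[l]" p] by simp

lemma paths_app: assumes "xs \<in> paths k i0" "\<sigma> \<in> paths k (last xs)" shows "xs @ \<sigma> \<in> paths k i0"
proof -
  have a: "xs \<noteq> []" "set xs \<subseteq> {1..k}" "hd xs \<noteq> i0" "\<forall>j. Suc j < length xs \<longrightarrow> xs ! j \<noteq> xs ! Suc j"
    "\<sigma> \<noteq> []" "set \<sigma> \<subseteq> {1..k}" "hd \<sigma> \<noteq> last xs" "\<forall>j. Suc j < length \<sigma> \<longrightarrow> \<sigma> ! j \<noteq> \<sigma> ! Suc j"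
    using assms unfolding paths_def by auto
  have "\<forall>j. Suc j < length (xs @ \<sigma>) \<longrightarrow> (xs @ \<sigma>) ! j \<noteq> (xs @ \<sigma>) ! Suc j"
  proof (intro allI impI)
    fix j assume j: "Suc j < length (xs @ \<sigma>)"
    consider "Suc j < length xs" | "Suc j = length xs" | "Suc j > length xs" by linarith
    then show "(xs @ \<sigma>) ! j \<noteq> (xs @ \<sigma>) ! Suc j"
    proof cases
      case 1 then show ?thesis using a by (simp add: nth_append)
    next
      case 2
      have jj: "j = length xs - 1" using 2 by simp
      then have "(xs @ \<sigma>) ! j = last xs" using a(1) by (simp add: nth_append last_conv_nth)
      moreover have "(xs @ \<sigma>) ! Suc j = hd \<sigma>" using 2 a(5) by (simp add: nth_append hd_conv_nth)
      ultimately show ?thesis using a by simp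
    next
      case 3
      then show ?thesis using a(8)[rule_format, of "j - length xs"] j by (simp add: nth_append Suc_diff_le)
    qed
  qed
  then show ?thesis using a unfolding paths_def by auto
qed

lemma paths_app_D: assumes "xs \<noteq> []" "\<sigma> \<noteq> []" "xs @ \<sigma> \<in> paths k i0"
  shows "xs \<in> paths k i0 \<and> \<sigma> \<in> paths k (last xs)"
proof -
  have a: "set xs \<subseteq> {1..k}" "set \<sigma> \<subseteq> {1..k}" "hd xs \<noteq> i0"
    "\<forall>j. Suc j < length xs + length \<sigma> \<longrightarrow> (xs @ \<sigma>) ! j \<noteq> (xs @ \<sigma>) ! Suc j"
    using assms unfolding paths_def by auto
  have b1: "\<forall>j. Suc j < length xs \<longrightarrow> xs ! j \<noteq> xs ! Suc j"
  proof (intro allI impI)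
    fix j assume "Suc j < length xs" then show "xs ! j \<noteq> xs ! Suc j"
      using a(4)[rule_format, of j] by (simp add: nth_append)
  qed
  have b2: "hd \<sigma> \<noteq> last xs" using a(4)[rule_format, of "length xs - 1"] assms(1,2)
    by (simp add: nth_append hd_conv_nth last_conv_nth)
  have b3: "\<forall>j. Suc j < length \<sigma> \<longrightarrow> \<sigma> ! j \<noteq> \<sigma> ! Suc j"
  proof (intro allI impI)
    fix j assume "Suc j < length \<sigma>" then show "\<sigma> ! j \<noteq> \<sigma> ! Suc j"
      using a(4)[rule_format, of "length xs + j"] by (simp add: nth_append)
  qed
  show ?thesis using a b1 b2 b3 assms(1,2) unfolding paths_def by auto
qed

lemma paths_single: "l \<in> {1..k} \<Longrightarrow> l \<noteq> i \<Longrightarrow> [l] \<in> paths k i"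
  unfolding paths_def by auto

lemma paths_snoc: "xs \<in> paths k i0 \<Longrightarrow> l \<in> {1..k} \<Longrightarrow> l \<noteq> last xs \<Longrightarrow> xs @ [l] \<in> paths k i0"
  using paths_app paths_single by metis

lemma paths_last: "xs \<in> paths k i0 \<Longrightarrow> last xs \<in> {1..k}"
  unfolding paths_def using last_in_set by blast

lemma paths_ne: "xs \<in> paths k i0 \<Longrightarrow> xs \<noteq> []"
  unfolding paths_def by auto

fun atm :: "('p,'t) gsym \<Rightarrow> 't set" where
  "atm (GAt a) = a" | "atm (GAct p) = {}"

definition lastat :: "('p,'t) gstring \<Rightarrow> 't set" where
  "lastat w = atm (last w)"

type_synonym ('p,'t) parse = "(nat \<times> ('p,'t) gstring) list"

fun cw :: "'t set \<Rightarrow> ('p,'t) parse \<Rightarrow> ('p,'t) gstring" where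
  "cw b [] = [GAt b]"
| "cw b ((c,w)#ps) = butlast w @ cw (lastat w) ps"

fun valid :: "(nat \<Rightarrow> ('p,'t) glang) \<Rightarrow> 't set \<Rightarrow> 't set \<Rightarrow> ('p,'t) parse \<Rightarrow> bool" where
  "valid Lc T b [] = True"
| "valid Lc T b ((c,w)#ps) = (w \<in> Lc c \<and> is_gs UNIV T w \<and> hd w = GAt b \<and> valid Lc T (lastat w) ps)"

fun ew :: "('t set \<Rightarrow> nat set) \<Rightarrow> 't set \<Rightarrow> ('p,'t) parse \<Rightarrow> (nat, nat) gstring" where
  "ew ab b [] = [GAt (ab b)]"
| "ew ab b ((c,w)#ps) = GAt (ab b) # GAct c # ew ab (lastat w) ps"

fun pre :: "'t set \<Rightarrow> ('p,'t) parse \<Rightarrow> ('p,'t) gstring" where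
  "pre b [] = []"
| "pre b ((c,w)#ps) = butlast w @ pre (lastat w) ps"

fun endat :: "'t set \<Rightarrow> ('p,'t) parse \<Rightarrow> 't set" where
  "endat b [] = b"
| "endat b ((c,w)#ps) = endat (lastat w) ps"

fun epre :: "('t set \<Rightarrow> nat set) \<Rightarrow> 't set \<Rightarrow> ('p,'t) parse \<Rightarrow> (nat, nat) gstring" where
  "epre ab b [] = []"
| "epre ab b ((c,w)#ps) = GAt (ab b) # GAct c # epre ab (lastat w) ps"

lemma cw_app: "cw b (P @ R) = pre b P @ cw (endat b P) R"
  by (induction P arbitrary: b) auto

lemma ew_app: "ew ab b (P @ R) = epre ab b P @ ew ab (endat b P) R"
  by (induction P arbitrary: b) auto

lemma valid_app: "valid Lc T b (P @ R) \<longleftrightarrow> valid Lc T b P \<and> valid Lc T (endat b P) R"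
  by (induction P arbitrary: b) auto

lemma is_gs_last: "is_gs S T w \<Longrightarrow> last w = GAt (lastat w)"
  using is_gs_ne[of S T w] unfolding lastat_def by auto

lemma cw_hd: "valid Lc T b ps \<Longrightarrow> \<exists>r. cw b ps = GAt b # r"
proof (induction ps arbitrary: b)
  case Nil then show ?case by simp
next
  case (Cons cw0 ps)
  obtain c w where e: "cw0 = (c, w)" by (cases cw0)
  with Cons have v: "w \<in> Lc c" "is_gs UNIV T w" "hd w = GAt b" "valid Lc T (lastat w) ps" by auto
  obtain r where r: "cw (lastat w) ps = GAt (lastat w) # r" using Cons.IH[OF v(4)] by blast
  show ?case
  proof (cases "butlast w = []")
    case True
    then have "w = [last w]" using is_gs_ne[OF v(2)] by (metis append_butlast_last_id append_self_conv2)
    then have "hd w = last w" by (metis list.sel(1))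
    then have "GAt b = GAt (lastat w)" using v(3) is_gs_last[OF v(2)] by simp
    then show ?thesis using e r True by simp
  next
    case False
    then have "hd (butlast w) = GAt b" using v(3) is_gs_ne[OF v(2)]
      by (metis append_butlast_last_id hd_append2)
    then show ?thesis using e False by (cases "butlast w") auto
  qed
qed

lemma cw_cons: "valid Lc T b ((c,w)#ps) \<Longrightarrow> cw b ((c,w)#ps) = w @ tl (cw (lastat w) ps)"
proof -
  assume v: "valid Lc T b ((c,w)#ps)"
  then have g: "is_gs UNIV T w" and v2: "valid Lc T (lastat w) ps" by auto
  obtain r where r: "cw (lastat w) ps = GAt (lastat w) # r" using cw_hd[OF v2] by blast
  have "w = butlast w @ [GAt (lastat w)]" using is_gs_last[OF g] is_gs_ne[OF g]
    by (metis append_butlast_last_id)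
  then show ?thesis using r by (metis append.assoc append_Cons append_Nil cw.simps(2) list.sel(3))
qed

lemma diverge_sym: "diverge x y \<Longrightarrow> diverge y x"
  unfolding diverge_def by metis

lemma comp_det:
  assumes dc: "\<forall>c. det' (Lc c)"
  shows "det' Le \<Longrightarrow> valid Lc T b ps \<Longrightarrow> ew ab b ps \<in> Le \<Longrightarrow> valid Lc T b' ps' \<Longrightarrow> ew ab b' ps' \<in> Le
    \<Longrightarrow> cw b ps \<noteq> cw b' ps' \<Longrightarrow> diverge (cw b ps) (cw b' ps')"
proof (induction ps arbitrary: b b' ps' Le)
  case Nil
  obtain r' where r': "cw b' ps' = GAt b' # r'" using cw_hd[OF Nil(4)] by blast
  show ?case
  proof (cases "b = b'")
    case False
    then show ?thesis using r' unfolding diverge_def by (intro exI[of _ "[]"]) auto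
  next
    case True
    show ?thesis
    proof (cases ps')
      case Nil then show ?thesis using True \<open>cw b [] \<noteq> cw b' ps'\<close> by simp
    next
      case (Cons x ps'')
      obtain c w where "x = (c, w)" by (cases x)
      then have "ew ab b' ps' = [GAt (ab b)] @ GAct c # ew ab (lastat w) ps''" using Cons True by simp
      then show ?thesis using det'_prefix[OF Nil(1), of "[GAt (ab b)]"] Nil(3,5) by auto
    qed
  qed
next
  case (Cons x ps)
  obtain c w where x: "x = (c, w)" by (cases x)
  obtain r where r: "cw b (x # ps) = GAt b # r" using cw_hd[OF Cons(3)] by blast
  obtain r' where r': "cw b' ps' = GAt b' # r'" using cw_hd[OF Cons(5)] by blast
  show ?case
  proof (cases "b = b'")
    case False
    then show ?thesis using r r' unfolding diverge_def by (intro exI[of _ "[]"]) auto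
  next
    case True
    show ?thesis
    proof (cases "ps' = []")
      case Nil: True
      then have "ew ab b (x # ps) = [GAt (ab b)] @ GAct c # ew ab (lastat w) ps" using x by simp
      then show ?thesis using det'_prefix[OF Cons(2), of "[GAt (ab b)]"] Cons(4,6) Nil True by auto
    next
      case False
      then obtain y ps'' where Cons2: "ps' = y # ps''" by (cases ps') auto
      obtain c' w' where y: "y = (c', w')" by (cases y)
      have e1: "[GAt (ab b)] @ GAct c # ew ab (lastat w) ps \<in> Le" using Cons(4) x by simp
      have e2: "[GAt (ab b)] @ GAct c' # ew ab (lastat w') ps'' \<in> Le" using Cons(6) Cons2 y True by simp
      have cc: "c = c'" using det'_act[OF Cons(2) e1 e2] by blast
      have vw: "valid Lc T b ((c,w) # ps)" using Cons(3) x by simp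
      have vw': "valid Lc T b ((c,w') # ps'')" using Cons(5) Cons2 y cc True by simp
      have wL: "w \<in> Lc c" "w' \<in> Lc c" using vw vw' by auto
      show ?thesis
      proof (cases "w = w'")
        case False
        then have "diverge w w'" using dc wL unfolding det'_def by blast
        then show ?thesis using cw_cons[OF vw] cw_cons[OF vw'] x Cons2 y cc True diverge_app2 by metis
      next
        case True2: True
        let ?L' = "{z. [GAt (ab b), GAct c] @ z \<in> Le}"
        have d': "det' ?L'" using det'_resid[OF Cons(2)] by blast
        have i1: "ew ab (lastat w) ps \<in> ?L'" using e1 by simp
        have i2: "ew ab (lastat w) ps'' \<in> ?L'" using e2 cc True2 by simp
        have v1: "valid Lc T (lastat w) ps" using vw by simp
        have v2: "valid Lc T (lastat w) ps''" using vw' True2 by simp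
        have ne: "cw (lastat w) ps \<noteq> cw (lastat w) ps''"
          using Cons(7) x Cons2 y True2 True by auto
        have "diverge (cw (lastat w) ps) (cw (lastat w) ps'')" using Cons.IH[OF d' v1 i1 v2 i2 ne] .
        then show ?thesis using diverge_app x Cons2 y True2 True by fastforce
      qed
    qed
  qed
qed


lemma dec_exists: "valid Lc T b ps \<Longrightarrow> cw b ps = Q @ x \<Longrightarrow> Q \<noteq> [] \<Longrightarrow> last Q = GAct p \<Longrightarrow>
  \<exists>P c v y R. ps = P @ (c, v @ y) # R \<and> Q = pre b P @ v \<and> v \<noteq> [] \<and> y \<noteq> []"
proof (induction ps arbitrary: b Q)
  case Nil
  then have "Q = [GAt b]" by (cases Q) auto
  then show ?case using Nil by simp
next
  case (Cons z ps)
  obtain c w where z: "z = (c, w)" by (cases z)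
  have v: "valid Lc T b ((c,w)#ps)" using Cons z by simp
  have e: "Q @ x = w @ tl (cw (lastat w) ps)" using cw_cons[OF v] Cons(3) z by simp
  show ?case
  proof (cases "length Q < length w")
    case True
    have "take (length Q) (Q @ x) = take (length Q) (w @ tl (cw (lastat w) ps))" using e by simp
    then have "Q = take (length Q) w" using True by simp
    then have "w = Q @ drop (length Q) w" by (metis append_take_drop_id)
    moreover have "drop (length Q) w \<noteq> []" using True by simp
    ultimately show ?thesis using z Cons(4)
      by (intro exI[of _ "[]"] exI[of _ c] exI[of _ Q] exI[of _ "drop (length Q) w"] exI[of _ ps]) auto
  next
    case False
    have g: "is_gs UNIV T w" using v by simp
    have wne: "w \<noteq> []" using is_gs_ne[OF g] by simp
    have e2: "Q @ x = butlast w @ cw (lastat w) ps" using Cons(3) z by simp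
    define Q' where "Q' = drop (length w - 1) Q"
    have "take (length w - 1) (Q @ x) = take (length w - 1) (butlast w @ cw (lastat w) ps)" using e2 by simp
    then have "take (length w - 1) Q = butlast w" using False by simp
    then have QQ: "Q = butlast w @ Q'" unfolding Q'_def by (metis append_take_drop_id)
    have Q'ne: "Q' \<noteq> []" using False wne unfolding Q'_def by (cases w) auto
    have lQ': "last Q' = GAct p" using Cons(5) QQ Q'ne by simp
    have e3: "cw (lastat w) ps = Q' @ x" using e2 QQ by simp
    have v2: "valid Lc T (lastat w) ps" using v by simp
    obtain P c' v' y R where IH: "ps = P @ (c', v' @ y) # R" "Q' = pre (lastat w) P @ v'" "v' \<noteq> []" "y \<noteq> []"
      using Cons.IH[OF v2 e3 Q'ne lQ'] by blast
    show ?thesis using IH QQ z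
      by (intro exI[of _ "(c,w) # P"] exI[of _ c'] exI[of _ v'] exI[of _ y] exI[of _ R]) auto
  qed
qed

lemma dec_unique: "P1 @ (c1, v1 @ y1) # R1 = P2 @ (c2, v2 @ y2) # R2 \<Longrightarrow> pre b P1 @ v1 = pre b P2 @ v2 \<Longrightarrow>
   v1 \<noteq> [] \<Longrightarrow> v2 \<noteq> [] \<Longrightarrow> y1 \<noteq> [] \<Longrightarrow> y2 \<noteq> [] \<Longrightarrow> P1 = P2 \<and> c1 = c2 \<and> v1 = v2"
proof (induction P1 arbitrary: P2 b)
  case Nil
  show ?case
  proof (cases P2)
    case Nil then show ?thesis using Nil.prems by simp
  next
    case (Cons z P2')
    obtain c w where z: "z = (c, w)" by (cases z)
    have w: "w = v1 @ y1" using Nil.prems(1) Cons z by simp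
    have "v1 = butlast w @ pre (lastat w) P2' @ v2" using Nil.prems(2) Cons z by simp
    then have "length v1 \<ge> length w - 1 + length v2" by simp
    moreover have "length v2 \<ge> 1" using Nil.prems(4) by (cases v2) auto
    moreover have "length y1 \<ge> 1" using Nil.prems(5) by (cases y1) auto
    ultimately show ?thesis using w by simp
  qed
next
  case (Cons z P1')
  obtain c w where z: "z = (c, w)" by (cases z)
  show ?case
  proof (cases P2)
    case Nil
    have w: "w = v2 @ y2" using Cons.prems(1) Nil z by simp
    have "v2 = butlast w @ pre (lastat w) P1' @ v1" using Cons.prems(2) Nil z by simp
    then have "length v2 \<ge> length w - 1 + length v1" by simp
    moreover have "length v1 \<ge> 1" using Cons.prems(3) by (cases v1) auto
    moreover have "length y2 \<ge> 1" using Cons.prems(6) by (cases y2) auto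
    ultimately show ?thesis using w by simp
  next
    case (Cons z' P2')
    have zz: "z' = z" and tl: "P1' @ (c1, v1 @ y1) # R1 = P2' @ (c2, v2 @ y2) # R2"
      using Cons.prems(1) Cons by auto
    have "pre (lastat w) P1' @ v1 = pre (lastat w) P2' @ v2" using Cons.prems(2) Cons zz z by simp
    then show ?thesis using Cons.IH[OF tl _ Cons.prems(3-6)] zz Cons by simp
  qed
qed

lemma nth_prefix: "x = p @ r \<Longrightarrow> i < length p \<Longrightarrow> x ! i = p ! i"
  by (simp add: nth_append)

lemma pc:
  assumes dc: "\<forall>c. det' (Lc c)"
  shows "det' Le \<Longrightarrow> valid Lc T b ps \<Longrightarrow> ew ab b ps \<in> Le \<Longrightarrow> ps = P @ (c, v @ y) # R \<Longrightarrow> v \<noteq> [] \<Longrightarrow> y \<noteq> []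
   \<Longrightarrow> valid Lc T b ps' \<Longrightarrow> ew ab b ps' \<in> Le \<Longrightarrow> cw b ps' = pre b P @ v @ x
   \<Longrightarrow> \<exists>y' R'. ps' = P @ (c, v @ y') # R' \<and> y' \<noteq> []"
proof (induction P arbitrary: b ps ps' Le)
  case Nil
  have vps: "valid Lc T b ((c, v @ y) # R)" using Nil(2) Nil(4) by simp
  show ?case
  proof (cases "ps' = []")
    case True
    have "ew ab b ps = [GAt (ab b)] @ GAct c # ew ab (lastat (v @ y)) R" using Nil(4) by simp
    moreover have "ew ab b ps' = [GAt (ab b)]" using True by simp
    ultimately have False using det'_prefix[OF Nil(1), of "[GAt (ab b)]" "GAct c # ew ab (lastat (v @ y)) R"] Nil(3,8) by simp
    then show ?thesis ..
  next
    case False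
    then obtain c' w' R' where ps': "ps' = (c', w') # R'" by (cases ps') auto
    have e1: "[GAt (ab b)] @ GAct c # ew ab (lastat (v @ y)) R \<in> Le" using Nil(3) Nil(4) by simp
    have e2: "[GAt (ab b)] @ GAct c' # ew ab (lastat w') R' \<in> Le" using Nil(8) ps' by simp
    have cc: "c = c'" using det'_act[OF Nil(1) e1 e2] by blast
    have vps': "valid Lc T b ((c, w') # R')" using Nil(7) ps' cc by simp
    have wL: "v @ y \<in> Lc c" "w' \<in> Lc c" using vps vps' by auto
    show ?thesis
    proof (cases "w' = v @ y")
      case True then show ?thesis using ps' cc Nil(6) by (intro exI[of _ y] exI[of _ R']) simp
    next
      case False
      then have ne: "v @ y \<noteq> w'" by metis
      have "diverge (v @ y) w'" using dc wL ne unfolding det'_def by blast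
      then obtain q a a' s s' where d: "a \<noteq> a'" "v @ y = q @ GAt a # s" "w' = q @ GAt a' # s'"
        unfolding diverge_def by blast
      have W2: "cw b ps' = w' @ tl (cw (lastat w') R')" using cw_cons[OF vps'] ps' cc by simp
      have lq: "length v \<le> length q"
      proof (rule ccontr)
        assume "\<not> length v \<le> length q"
        then have lt: "length q < length v" by simp
        have "(cw b ps') ! length q = GAt a'" using W2 d(3) by (simp add: nth_append)
        moreover have "(cw b ps') ! length q = v ! length q" using Nil(9) lt by (simp add: nth_append)
        moreover have "(v @ y) ! length q = GAt a" using d(2) by simp
        ultimately show False using lt d(1) by (simp add: nth_append)
      qed
      have "take (length v) w' = v"
      proof -
        have "take (length v) (v @ y) = take (length v) q" using d(2) lq by simp
        moreover have "take (length v) w' = take (length v) q" using d(3) lq by simp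
        ultimately show ?thesis by simp
      qed
      define y' where "y' = drop (length v) w'"
      have wy: "w' = v @ y'" unfolding y'_def using \<open>take (length v) w' = v\<close> by (metis append_take_drop_id)
      have "y' \<noteq> []" unfolding y'_def using d(3) lq by simp
      then show ?thesis using ps' cc wy by (intro exI[of _ y'] exI[of _ R']) simp
    qed
  qed
next
  case (Cons z P)
  obtain c0 w0 where z: "z = (c0, w0)" by (cases z)
  have vps: "valid Lc T b ((c0, w0) # P @ (c, v @ y) # R)" using Cons z by simp
  show ?case
  proof (cases "ps' = []")
    case True
    have "ew ab b ps = [GAt (ab b)] @ GAct c0 # ew ab (lastat w0) (P @ (c, v @ y) # R)" using Cons(5) z by simp
    moreover have "ew ab b ps' = [GAt (ab b)]" using True by simp
    ultimately have False using det'_prefix[OF Cons(2), of "[GAt (ab b)]" "GAct c0 # ew ab (lastat w0) (P @ (c, v @ y) # R)"] Cons(4,9) by simp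
    then show ?thesis ..
  next
    case False
    then obtain c' w' R' where ps': "ps' = (c', w') # R'" by (cases ps') auto
    have e1: "[GAt (ab b)] @ GAct c0 # ew ab (lastat w0) (P @ (c, v @ y) # R) \<in> Le" using Cons(4) Cons(5) z by simp
    have e2: "[GAt (ab b)] @ GAct c' # ew ab (lastat w') R' \<in> Le" using Cons(9) ps' by simp
    have cc: "c0 = c'" using det'_act[OF Cons(2) e1 e2] by blast
    have vps': "valid Lc T b ((c0, w') # R')" using Cons(8) ps' cc by simp
    have wL: "w0 \<in> Lc c0" "w' \<in> Lc c0" using vps vps' by auto
    have W1: "cw b ps = w0 @ tl (cw (lastat w0) (P @ (c, v @ y) # R))" using cw_cons[OF vps] Cons(5) z by simp
    have W2: "cw b ps' = w' @ tl (cw (lastat w') R')" using cw_cons[OF vps'] ps' cc by simp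
    have Qdef: "pre b (z # P) @ v = butlast w0 @ pre (lastat w0) P @ v" using z by simp
    have g0: "is_gs UNIV T w0" using vps by simp
    have lQ: "length (pre b (z # P) @ v) \<ge> length w0"
    proof -
      have "length v \<ge> 1" using Cons(6) by (cases v) auto
      moreover have "length w0 \<ge> 1" using is_gs_ne[OF g0] by (cases w0) auto
      ultimately show ?thesis using Qdef by simp
    qed
    have W1': "cw b ps = pre b (z # P) @ v @ y @ tl (cw (lastat (v @ y)) R)"
    proof -
      have a1: "cw b ps = pre b (z # P) @ cw (endat b (z # P)) ((c, v @ y) # R)"
        unfolding Cons(5) by (rule cw_app)
      have a2: "valid Lc T (endat b (z # P)) ((c, v @ y) # R)" using Cons(3) unfolding Cons(5) valid_app by blast
      have a3: "cw (endat b (z # P)) ((c, v @ y) # R) = (v @ y) @ tl (cw (lastat (v @ y)) R)"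
        by (rule cw_cons[OF a2])
      show ?thesis using a1 a3 by simp
    qed
    show ?thesis
    proof (cases "w' = w0")
      case False
      then have ne: "w0 \<noteq> w'" by metis
      have "diverge w0 w'" using dc wL ne unfolding det'_def by blast
      then obtain q a a' s s' where d: "a \<noteq> a'" "w0 = q @ GAt a # s" "w' = q @ GAt a' # s'"
        unfolding diverge_def by blast
      have lt: "length q < length (pre b (z # P) @ v)" using lQ d(2) by simp
      have "(cw b ps) ! length q = GAt a" using W1 d(2) by (simp add: nth_append)
      moreover have "(cw b ps') ! length q = GAt a'" using W2 d(3) by (simp add: nth_append)
      moreover have "(cw b ps) ! length q = (cw b ps') ! length q"
      proof -
        have A: "cw b ps = (pre b (z # P) @ v) @ (y @ tl (cw (lastat (v @ y)) R))" using W1' by simp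
        have B: "cw b ps' = (pre b (z # P) @ v) @ x" using Cons(10) by simp
        show ?thesis using nth_prefix[OF A lt] nth_prefix[OF B lt] by simp
      qed
      ultimately show ?thesis using d(1) by simp
    next
      case True
      let ?L' = "{z. [GAt (ab b), GAct c0] @ z \<in> Le}"
      have d': "det' ?L'" using det'_resid[OF Cons(2)] by blast
      have i1: "ew ab (lastat w0) (P @ (c, v @ y) # R) \<in> ?L'" using e1 by simp
      have i2: "ew ab (lastat w0) R' \<in> ?L'" using e2 cc True by simp
      have v1: "valid Lc T (lastat w0) (P @ (c, v @ y) # R)" using vps by simp
      have v2: "valid Lc T (lastat w0) R'" using vps' True by simp
      have "cw b ps' = butlast w0 @ cw (lastat w0) R'" using ps' True by simp
      then have x2: "cw (lastat w0) R' = pre (lastat w0) P @ v @ x" using Cons(10) z by simp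
      obtain y' R'' where "R' = P @ (c, v @ y') # R''" "y' \<noteq> []"
        using Cons.IH[OF d' v1 i1 refl Cons(6,7) v2 i2 x2] by blast
      then show ?thesis using ps' cc True z by auto
    qed
  qed
qed

lemma pre_app: "pre b (P @ R) = pre b P @ pre (endat b P) R"
  by (induction P arbitrary: b) auto

lemma epre_app: "epre ab b (P @ R) = epre ab b P @ epre ab (endat b P) R"
  by (induction P arbitrary: b) auto

lemma endat_app: "endat b (P @ R) = endat (endat b P) R"
  by (induction P arbitrary: b) auto

lemma lastat_single[simp]: "lastat [GAt a] = a"
  unfolding lastat_def by simp

lemma lastat_app: "y \<noteq> [] \<Longrightarrow> lastat (v @ y) = lastat y"
  unfolding lastat_def by simp

lemma cw_split: "valid Lc T b (P @ (c, v @ y) # R) \<Longrightarrow> y \<noteq> [] \<Longrightarrow>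
   cw b (P @ (c, v @ y) # R) = pre b P @ v @ butlast y @ cw (lastat y) R"
  using cw_app[of b P "(c, v @ y) # R"] lastat_app[of y v] by (simp add: butlast_append)

lemma tail_single:
  assumes "butlast y @ cw g R = [GAt a]" "y \<noteq> []" "last y = GAt g" "valid Lc T g R"
  shows "y = [GAt a] \<and> g = a \<and> cw g R = [GAt a]"
proof -
  obtain r where r: "cw g R = GAt g # r" using cw_hd[OF assms(4)] by blast
  then have "butlast y = []" "r = []" "g = a" using assms(1) by (cases "butlast y"; simp)+
  moreover have "y = butlast y @ [last y]" using assms(2) by simp
  ultimately show ?thesis using assms(3) r by simp
qed

lemma tests_lemma: "valid Lc T g R \<Longrightarrow> cw g R = GAt g # GAct p # r \<Longrightarrow>
   \<exists>ts c w R'. R = map (\<lambda>t. (t, [GAt g])) ts @ (c, GAt g # GAct p # w) # R' \<and> w \<noteq> []"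
proof (induction R)
  case Nil then show ?case by simp
next
  case (Cons z R)
  obtain t w where z: "z = (t, w)" by (cases z)
  have v: "w \<in> Lc t" "is_gs UNIV T w" "hd w = GAt g" "valid Lc T (lastat w) R" using Cons.prems z by auto
  show ?case
  proof (cases "length w = 1")
    case True
    then have w: "w = [GAt g]" using v(3) by (cases w) auto
    then have "cw (lastat w) R = GAt g # GAct p # r" using Cons.prems(2) z by simp
    then have "cw g R = GAt g # GAct p # r" using w by simp
    then obtain ts c w' R' where "R = map (\<lambda>t. (t, [GAt g])) ts @ (c, GAt g # GAct p # w') # R'" "w' \<noteq> []"
      using Cons.IH v(4) w lastat_single[of g] by auto
    then show ?thesis using z w by (intro exI[of _ "t # ts"]) auto
  next
    case False
    obtain a q w' where w: "w = GAt a # GAct q # w'" "is_gs UNIV T w'" using is_gs_long[OF v(2) False] by blast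
    have "cw g ((t, w) # R) = w @ tl (cw (lastat w) R)" using cw_cons Cons.prems(1) z by blast
    then have "q = p" "a = g" using Cons.prems(2) z w by auto
    moreover have "w' \<noteq> []" using is_gs_ne[OF w(2)] by simp
    ultimately show ?thesis using z w by (intro exI[of _ "[]"]) auto
  qed
qed

lemma ew_tests: "ew ab g (map (\<lambda>t. (t, [GAt g])) ts @ X) = concat (map (\<lambda>t. [GAt (ab g), GAct t]) ts) @ ew ab g X"
  by (induction ts) (auto simp: lastat_single)

lemma epre_tests: "epre ab g (map (\<lambda>t. (t, [GAt g])) ts) = concat (map (\<lambda>t. [GAt (ab g), GAct t]) ts)"
  by (induction ts) (auto simp: lastat_single)

lemma pre_tests: "pre g (map (\<lambda>t. (t, [GAt g])) ts) = []"
  by (induction ts) (auto simp: lastat_single)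

lemma endat_tests: "endat g (map (\<lambda>t. (t, [GAt g])) ts) = g"
  by (induction ts) (auto simp: lastat_single)

lemma chain_lemma:
  "det' Le \<Longrightarrow> E0 @ concat (map (\<lambda>t. [GAt A, GAct t]) (xs @ [c])) @ GAt A' # r1 \<in> Le \<Longrightarrow>
   E0 @ concat (map (\<lambda>t. [GAt A, GAct t]) (ys @ [c])) @ GAt A' # r2 \<in> Le \<Longrightarrow>
   c \<notin> set xs \<Longrightarrow> c \<notin> set ys \<Longrightarrow> xs = ys"
proof (induction xs arbitrary: ys E0)
  case Nil
  show ?case
  proof (cases ys)
    case Nil then show ?thesis by simp
  next
    case (Cons y ys')
    have "y \<noteq> c" using Nil.prems(5) Cons by (metis list.set_intros(1))
    moreover have "(E0 @ [GAt A]) @ GAct c # GAt A' # r1 \<in> Le" using Nil.prems(2) by simp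
    moreover have "(E0 @ [GAt A]) @ GAct y # (concat (map (\<lambda>t. [GAt A, GAct t]) (ys' @ [c])) @ GAt A' # r2) \<in> Le"
      using Nil.prems(3) Cons by simp
    ultimately show ?thesis using det'_act[OF Nil.prems(1)] by metis
  qed
next
  case (Cons x xs)
  show ?case
  proof (cases ys)
    case Nil
    have "x \<noteq> c" using Cons.prems(4) by (metis list.set_intros(1))
    moreover have "(E0 @ [GAt A]) @ GAct c # GAt A' # r2 \<in> Le" using Cons.prems(3) Nil by simp
    moreover have "(E0 @ [GAt A]) @ GAct x # (concat (map (\<lambda>t. [GAt A, GAct t]) (xs @ [c])) @ GAt A' # r1) \<in> Le"
      using Cons.prems(2) by simp
    ultimately show ?thesis using det'_act[OF Cons.prems(1)] by metis
  next
    case (Cons y ys')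
    have a1: "(E0 @ [GAt A]) @ GAct x # (concat (map (\<lambda>t. [GAt A, GAct t]) (xs @ [c])) @ GAt A' # r1) \<in> Le"
      using Cons.prems(2) by simp
    have a2: "(E0 @ [GAt A]) @ GAct y # (concat (map (\<lambda>t. [GAt A, GAct t]) (ys' @ [c])) @ GAt A' # r2) \<in> Le"
      using Cons.prems(3) Cons by simp
    have xy: "x = y" using det'_act[OF Cons.prems(1) a1 a2] by metis
    have b1: "(E0 @ [GAt A, GAct x]) @ concat (map (\<lambda>t. [GAt A, GAct t]) (xs @ [c])) @ GAt A' # r1 \<in> Le"
      using a1 by simp
    have b2: "(E0 @ [GAt A, GAct x]) @ concat (map (\<lambda>t. [GAt A, GAct t]) (ys' @ [c])) @ GAt A' # r2 \<in> Le"
      using a2 xy by simp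
    have "xs = ys'" using Cons.IH[OF Cons.prems(1) b1 b2] Cons.prems(4,5) Cons by simp
    then show ?thesis using xy Cons by simp
  qed
qed

locale comp =
  fixes Lc :: "nat \<Rightarrow> (nat,nat) glang" and T :: "nat set" and ab :: "nat set \<Rightarrow> nat set"
    and Le :: "(nat,nat) glang" and L :: "(nat,nat) glang"
  assumes dc: "\<forall>c. det' (Lc c)" and de: "det' Le"
    and L_def: "L = {cw b ps | b ps. b \<subseteq> T \<and> valid Lc T b ps \<and> ew ab b ps \<in> Le}"
begin

lemma L_det: "det' L"
  unfolding det'_def L_def using comp_det[OF dc de] by blast

lemma swap:
  assumes "valid Lc T b0 (P1 @ (c, w1) # R1)" "valid Lc T b0 (P2 @ (c, w2) # R2)"
    "ew ab b0 (P2 @ (c, w2) # R2) \<in> Le" "epre ab b0 P1 = epre ab b0 P2"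
    "ab (endat b0 P1) = ab (endat b0 P2)" "lastat w1 = lastat w2" "b0 \<subseteq> T"
  shows "cw b0 (P1 @ (c, w1) # R2) \<in> L"
proof -
  have "valid Lc T b0 (P1 @ (c, w1) # R2)"
    using assms(1,2,6) unfolding valid_app by simp
  moreover have "ew ab b0 (P1 @ (c, w1) # R2) = ew ab b0 (P2 @ (c, w2) # R2)"
    unfolding ew_app using assms(4,5,6) by simp
  ultimately have "ew ab b0 (P1 @ (c, w1) # R2) \<in> Le \<and> valid Lc T b0 (P1 @ (c, w1) # R2)" using assms(3) by simp
  then show ?thesis using assms(7) unfolding L_def by blast
qed

end

definition tangle :: "nat \<Rightarrow> (nat,nat) glang \<Rightarrow> bool" where
  "tangle k L \<longleftrightarrow> (\<exists>u i0. \<forall>xs \<in> paths k i0. u @ lk_word i0 xs \<in> L)"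

lemma lk_word_hd: "xs \<noteq> [] \<Longrightarrow> hd (lk_word p xs) = GAt {hd xs}"
  by (cases "(p, xs)" rule: lk_word.cases) auto

locale desc = comp +
  fixes k u i0 l0
  assumes tang: "\<forall>xs \<in> paths k i0. u @ lk_word i0 xs \<in> L"
    and l0: "l0 \<in> {1..k}" "l0 \<noteq> i0"
begin

definition W where "W \<rho> = u @ lk_word i0 \<rho>"
definition Q where "Q \<rho> = u @ butlast (lk_word i0 \<rho>)"
definition point where "point \<rho> \<longleftrightarrow> \<rho> \<in> paths k i0 \<and> hd \<rho> = l0"
definition b0 where "b0 = atm (hd (W [l0]))"
definition pars where "pars \<rho> ps \<longleftrightarrow> valid Lc T b0 ps \<and> ew ab b0 ps \<in> Le \<and> cw b0 ps = W \<rho>"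

lemma point_ne: "point \<rho> \<Longrightarrow> \<rho> \<noteq> []"
  unfolding point_def using paths_ne by blast

lemma point0: "point [l0]"
  unfolding point_def using paths_single[OF l0] by simp

lemma W_Q: "\<rho> \<noteq> [] \<Longrightarrow> W \<rho> = Q \<rho> @ [GAt {last \<rho>}]"
  unfolding W_def Q_def using lk_word_last[of \<rho> i0] by simp

lemma W_snoc: "\<rho> \<noteq> [] \<Longrightarrow> W (\<rho> @ [l]) = Q \<rho> @ [GAt {l}, GAct (last \<rho>), GAt {l}]"
  unfolding W_def Q_def using lk_word_snoc[of \<rho> i0 l] by simp

lemma Q_snoc: "\<rho> \<noteq> [] \<Longrightarrow> Q (\<rho> @ [l]) = Q \<rho> @ [GAt {l}, GAct (last \<rho>)]"
  unfolding Q_def using lk_word_snoc[of \<rho> i0 l] by (simp add: butlast_append)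

lemma Q_last: "\<rho> \<noteq> [] \<Longrightarrow> Q \<rho> \<noteq> [] \<and> (\<exists>p. last (Q \<rho>) = GAct p)"
  unfolding Q_def using lk_word_butlast[of \<rho> i0] by auto

lemma W_ext: "\<rho> \<noteq> [] \<Longrightarrow> \<exists>x. W (\<rho> @ \<sigma>) = Q \<rho> @ x"
proof (cases "\<sigma> = []")
  case True
  assume "\<rho> \<noteq> []" then show ?thesis using W_Q True by auto
next
  case False
  assume r: "\<rho> \<noteq> []"
  then show ?thesis unfolding W_def Q_def using lk_word_app[OF r False, of i0] by auto
qed

lemma point_ext: "point \<rho> \<Longrightarrow> \<rho> @ \<sigma> \<in> paths k i0 \<Longrightarrow> point (\<rho> @ \<sigma>)"
  unfolding point_def using paths_ne by auto

lemma point_snoc: "point \<rho> \<Longrightarrow> l \<in> {1..k} \<Longrightarrow> l \<noteq> last \<rho> \<Longrightarrow> point (\<rho> @ [l])"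
  unfolding point_def using paths_snoc paths_ne by auto

lemma hd_W: "point \<rho> \<Longrightarrow> hd (W \<rho>) = hd (W [l0])"
proof -
  assume p: "point \<rho>"
  then have ne: "\<rho> \<noteq> []" and h: "hd \<rho> = l0" using point_ne point_def by auto
  show ?thesis
  proof (cases u)
    case Nil then show ?thesis unfolding W_def using lk_word_hd[OF ne, of i0] lk_word_hd[of "[l0]" i0] h by simp
  next
    case (Cons a u') then show ?thesis unfolding W_def by simp
  qed
qed

lemma parse_ex: "point \<rho> \<Longrightarrow> b0 \<subseteq> T \<and> (\<exists>ps. pars \<rho> ps)"
proof -
  assume p: "point \<rho>"
  then have "W \<rho> \<in> L" using tang unfolding point_def W_def by blast
  then have "\<exists>b ps. W \<rho> = cw b ps \<and> b \<subseteq> T \<and> valid Lc T b ps \<and> ew ab b ps \<in> Le"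
    unfolding L_def by (simp only: mem_Collect_eq)
  then obtain b ps where bp: "b \<subseteq> T" "valid Lc T b ps" "ew ab b ps \<in> Le" "cw b ps = W \<rho>"
    by metis
  obtain r where "cw b ps = GAt b # r" using cw_hd[OF bp(2)] by blast
  then have "hd (W \<rho>) = GAt b" using bp(4) by simp
  then have "b = b0" unfolding b0_def using hd_W[OF p] by (metis atm.simps(1))
  then show ?thesis using bp unfolding pars_def by blast
qed

lemma b0T: "b0 \<subseteq> T"
  using parse_ex[OF point0] by blast

lemma pars_L: "valid Lc T b0 ps \<Longrightarrow> ew ab b0 ps \<in> Le \<Longrightarrow> cw b0 ps \<in> L"
  unfolding L_def using b0T by (simp only: mem_Collect_eq) metis

definition Dec where
  "Dec \<rho> P c v \<longleftrightarrow> Q \<rho> = pre b0 P @ v \<and> v \<noteq> [] \<and>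
     (\<forall>\<sigma> ps. \<rho> @ \<sigma> \<in> paths k i0 \<longrightarrow> pars (\<rho> @ \<sigma>) ps \<longrightarrow> (\<exists>y R. ps = P @ (c, v @ y) # R \<and> y \<noteq> []))"

lemma dec_ex: "point \<rho> \<Longrightarrow> \<exists>P c v. Dec \<rho> P c v"
proof -
  assume p: "point \<rho>"
  have ne: "\<rho> \<noteq> []" using point_ne[OF p] .
  obtain ps where ps: "pars \<rho> ps" using parse_ex[OF p] by blast
  obtain q where q: "last (Q \<rho>) = GAct q" "Q \<rho> \<noteq> []" using Q_last[OF ne] by blast
  have "cw b0 ps = Q \<rho> @ [GAt {last \<rho>}]" using ps W_Q[OF ne] unfolding pars_def by simp
  then obtain P c v y R where d: "ps = P @ (c, v @ y) # R" "Q \<rho> = pre b0 P @ v" "v \<noteq> []" "y \<noteq> []"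
    using dec_exists[of Lc T b0 ps "Q \<rho>" _ q] q ps unfolding pars_def by blast
  have "\<forall>\<sigma> ps'. \<rho> @ \<sigma> \<in> paths k i0 \<longrightarrow> pars (\<rho> @ \<sigma>) ps' \<longrightarrow> (\<exists>y R. ps' = P @ (c, v @ y) # R \<and> y \<noteq> [])"
  proof (intro allI impI)
    fix \<sigma> ps' assume "\<rho> @ \<sigma> \<in> paths k i0" "pars (\<rho> @ \<sigma>) ps'"
    obtain x where x: "W (\<rho> @ \<sigma>) = Q \<rho> @ x" using W_ext[OF ne] by blast
    have "cw b0 ps' = pre b0 P @ v @ x" using x d(2) \<open>pars (\<rho> @ \<sigma>) ps'\<close> unfolding pars_def by simp
    moreover have "valid Lc T b0 ps" "ew ab b0 ps \<in> Le" using ps unfolding pars_def by auto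
    moreover have "valid Lc T b0 ps'" "ew ab b0 ps' \<in> Le" using \<open>pars (\<rho> @ \<sigma>) ps'\<close> unfolding pars_def by auto
    ultimately show "\<exists>y R. ps' = P @ (c, v @ y) # R \<and> y \<noteq> []"
      using pc[OF dc de _ _ d(1) d(3) d(4)] by blast
  qed
  then show ?thesis using d unfolding Dec_def by blast
qed

lemma dec_parse_ext: "Dec \<rho> P c v \<Longrightarrow> pars (\<rho> @ \<sigma>) ps \<Longrightarrow> \<rho> @ \<sigma> \<in> paths k i0 \<Longrightarrow> \<exists>y R. ps = P @ (c, v @ y) # R \<and> y \<noteq> []"
  unfolding Dec_def by (elim conjE) (drule spec[of _ \<sigma>], drule spec[of _ ps], simp)

lemma dec_parse: "Dec \<rho> P c v \<Longrightarrow> pars \<rho> ps \<Longrightarrow> point \<rho> \<Longrightarrow> \<exists>y R. ps = P @ (c, v @ y) # R \<and> y \<noteq> []"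
  using dec_parse_ext[of \<rho> P c v "[]" ps] unfolding point_def by simp

lemma dec_uniq: "Dec \<rho> P c v \<Longrightarrow> Dec \<rho> P' c' v' \<Longrightarrow> point \<rho> \<Longrightarrow> P = P' \<and> c = c' \<and> v = v'"
proof -
  assume d1: "Dec \<rho> P c v" and d2: "Dec \<rho> P' c' v'" and p: "point \<rho>"
  obtain ps where ps: "pars \<rho> ps" using parse_ex[OF p] by blast
  obtain y R where 1: "ps = P @ (c, v @ y) # R" "y \<noteq> []" using dec_parse[OF d1 ps p] by blast
  obtain y' R' where 2: "ps = P' @ (c', v' @ y') # R'" "y' \<noteq> []" using dec_parse[OF d2 ps p] by blast
  have "pre b0 P @ v = pre b0 P' @ v'" using d1 d2 unfolding Dec_def by simp
  moreover have "v \<noteq> []" "v' \<noteq> []" using d1 d2 unfolding Dec_def by auto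
  ultimately show ?thesis using dec_unique[of P c v y R P' c' v' y' R' b0] 1 2 by simp
qed

lemma call_facts: "valid Lc T b (P @ (c, w) # R) \<Longrightarrow>
   w \<in> Lc c \<and> is_gs UNIV T w \<and> hd w = GAt (endat b P) \<and> valid Lc T (lastat w) R \<and> valid Lc T b P"
  unfolding valid_app by simp

lemma y_facts: "valid Lc T b (P @ (c, v @ y) # R) \<Longrightarrow> y \<noteq> [] \<Longrightarrow>
   last y = GAt (lastat y) \<and> valid Lc T (lastat y) R"
proof -
  assume v: "valid Lc T b (P @ (c, v @ y) # R)" and y: "y \<noteq> []"
  have "is_gs UNIV T (v @ y)" "valid Lc T (lastat (v @ y)) R" using call_facts[OF v] by auto
  then show ?thesis using is_gs_last[of UNIV T "v @ y"] lastat_app[OF y] y by simp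
qed

lemma stay_end: "Dec \<rho> P c v \<Longrightarrow> point \<rho> \<Longrightarrow> pars \<rho> ps \<Longrightarrow>
   \<exists>R. ps = P @ (c, v @ [GAt {last \<rho>}]) # R \<and> cw {last \<rho>} R = [GAt {last \<rho>}]"
proof -
  assume d: "Dec \<rho> P c v" and p: "point \<rho>" and ps: "pars \<rho> ps"
  obtain y R where yR: "ps = P @ (c, v @ y) # R" "y \<noteq> []" using dec_parse[OF d ps p] by blast
  have v: "valid Lc T b0 (P @ (c, v @ y) # R)" using ps yR unfolding pars_def by simp
  have "pre b0 P @ v @ butlast y @ cw (lastat y) R = W \<rho>" using cw_split[OF v yR(2)] ps yR unfolding pars_def by simp
  also have "W \<rho> = pre b0 P @ v @ [GAt {last \<rho>}]" using W_Q[OF point_ne[OF p]] d unfolding Dec_def by simp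
  finally have e: "butlast y @ cw (lastat y) R = [GAt {last \<rho>}]" by simp
  have "y = [GAt {last \<rho>}] \<and> lastat y = {last \<rho>} \<and> cw (lastat y) R = [GAt {last \<rho>}]"
    using tail_single[OF e yR(2)] y_facts[OF v yR(2)] by blast
  then show ?thesis using yR by auto
qed

lemma trans_dec:
  assumes p: "point \<rho>" and l: "l \<in> {1..k}" "l \<noteq> last \<rho>" and d: "Dec \<rho> P c v" and d': "Dec (\<rho> @ [l]) P' c' v'"
  shows "(P' = P \<and> c' = c \<and> v' = v @ [GAt {l}, GAct (last \<rho>)]) \<or>
    (\<exists>ts. P' = P @ (c, v @ [GAt {l}]) # map (\<lambda>t. (t, [GAt {l}])) ts \<and> v' = [GAt {l}, GAct (last \<rho>)])"
proof -
  have ne: "\<rho> \<noteq> []" using point_ne[OF p] .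
  have p': "point (\<rho> @ [l])" using point_snoc[OF p l] .
  obtain ps where ps: "pars (\<rho> @ [l]) ps" using parse_ex[OF p'] by blast
  have pl: "\<rho> @ [l] \<in> paths k i0" using p' unfolding point_def by simp
  obtain y R where yR: "ps = P @ (c, v @ y) # R" "y \<noteq> []" using dec_parse_ext[OF d ps pl] by blast
  obtain y' R' where yR': "ps = P' @ (c', v' @ y') # R'" "y' \<noteq> []" using dec_parse[OF d' ps p'] by blast
  have Qd: "Q \<rho> = pre b0 P @ v" "v \<noteq> []" using d unfolding Dec_def by auto
  have Qd': "Q (\<rho> @ [l]) = pre b0 P' @ v'" "v' \<noteq> []" using d' unfolding Dec_def by auto
  have v: "valid Lc T b0 (P @ (c, v @ y) # R)" using ps yR unfolding pars_def by simp
  have "pre b0 P @ v @ butlast y @ cw (lastat y) R = W (\<rho> @ [l])" using cw_split[OF v yR(2)] ps yR unfolding pars_def by simp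
  also have "W (\<rho> @ [l]) = pre b0 P @ v @ [GAt {l}, GAct (last \<rho>), GAt {l}]" using W_snoc[OF ne] Qd by simp
  finally have e: "butlast y @ cw (lastat y) R = [GAt {l}, GAct (last \<rho>), GAt {l}]" by simp
  have yf: "last y = GAt (lastat y)" "valid Lc T (lastat y) R" using y_facts[OF v yR(2)] by auto
  obtain r where r: "cw (lastat y) R = GAt (lastat y) # r" using cw_hd[OF yf(2)] by blast
  have gsvy: "is_gs UNIV T (v @ y)" using call_facts[OF v] by simp
  obtain q where q: "last v = GAct q" using Q_last[OF ne] Qd by (metis last_appendR)
  have gsy: "is_gs UNIV T y" using is_gs_suffix[OF gsvy Qd(2) q] .
  have oddy: "odd (length y)" using is_gs_odd[OF gsy] .
  have Qs: "Q (\<rho> @ [l]) = pre b0 P @ v @ [GAt {l}, GAct (last \<rho>)]" using Q_snoc[OF ne] Qd by simp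
  have len: "length (butlast y) + length r = 2" using e r by (metis One_nat_def add_Suc_right length_Cons length_append list.size(3) numeral_2_eq_2 numeral_3_eq_3 Suc_inject)
  have ev: "even (length (butlast y))" using oddy yR(2) by (cases y) auto
  have "length (butlast y) = 0 \<or> length (butlast y) = 2" using len ev by presburger
  then show ?thesis
  proof
    assume "length (butlast y) = 2"
    then have by2: "butlast y = [GAt {l}, GAct (last \<rho>)]" using e
      by (metis append_eq_conv_conj take_Cons_numeral take_Nil numeral_2_eq_2 take_0 take_Suc_Cons)
    have yy: "y = [GAt {l}, GAct (last \<rho>)] @ [last y]" using by2 yR(2) by (metis append_butlast_last_id)
    have "ps = P @ (c, (v @ [GAt {l}, GAct (last \<rho>)]) @ [last y]) # R" using yR yy by simp
    moreover have "pre b0 P @ (v @ [GAt {l}, GAct (last \<rho>)]) = pre b0 P' @ v'" using Qs Qd' by simp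
    ultimately have "P = P' \<and> c = c' \<and> v @ [GAt {l}, GAct (last \<rho>)] = v'"
      using dec_unique[of P c "v @ [GAt {l}, GAct (last \<rho>)]" "[last y]" R P' c' v' y' R' b0] yR' Qd'(2) by simp
    then show ?thesis by simp
  next
    assume "length (butlast y) = 0"
    then have by0: "butlast y = []" by (simp only: length_0_conv)
    then have yy: "y = [GAt (lastat y)]" using yf(1) yR(2) by (metis append_butlast_last_id append_Nil)
    have cwR: "cw (lastat y) R = [GAt {l}, GAct (last \<rho>), GAt {l}]" using e by0 by simp
    then have gl: "lastat y = {l}" using r by simp
    obtain ts c'' w R'' where tR: "R = map (\<lambda>t. (t, [GAt {l}])) ts @ (c'', GAt {l} # GAct (last \<rho>) # w) # R''" "w \<noteq> []"
      using tests_lemma[OF yf(2)] cwR gl by (metis append_Cons append_Nil)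
    define Pn where "Pn = P @ (c, v @ [GAt {l}]) # map (\<lambda>t. (t, [GAt {l}])) ts"
    have psn: "ps = Pn @ (c'', [GAt {l}, GAct (last \<rho>)] @ w) # R''" using yR yy gl tR unfolding Pn_def by simp
    have "pre b0 Pn = pre b0 P @ v"
      unfolding Pn_def pre_app using lastat_app[of "[GAt {l}]" v] by (simp add: pre_tests butlast_append)
    then have "pre b0 Pn @ [GAt {l}, GAct (last \<rho>)] = pre b0 P' @ v'" using Qs Qd' by simp
    then have "Pn = P' \<and> c'' = c' \<and> [GAt {l}, GAct (last \<rho>)] = v'"
      using dec_unique[of Pn c'' "[GAt {l}, GAct (last \<rho>)]" w R'' P' c' v' y' R' b0] psn yR' tR(2) Qd'(2) by simp
    then show ?thesis unfolding Pn_def by auto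
  qed
qed

end

lemma cw_call: "cw b (P @ (c, w) # R) = pre b P @ butlast w @ cw (lastat w) R"
  using cw_app[of b P "(c, w) # R"] by simp

context desc
begin

lemma exit_parse:
  assumes p: "point \<rho>" and l: "l \<in> {1..k}" "l \<noteq> last \<rho>" and d: "Dec \<rho> P c v"
    and d': "Dec (\<rho> @ [l]) (P @ (c, v @ [GAt {l}]) # map (\<lambda>t. (t, [GAt {l}])) ts) c' [GAt {l}, GAct (last \<rho>)]"
    and ps: "pars (\<rho> @ [l]) ps"
  shows "\<exists>R. ps = P @ (c, v @ [GAt {l}]) # R \<and> cw {l} R = [GAt {l}, GAct (last \<rho>), GAt {l}]"
proof -
  have ne: "\<rho> \<noteq> []" using point_ne[OF p] .
  have p': "point (\<rho> @ [l])" using point_snoc[OF p l] .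
  obtain y R0 where yR: "ps = (P @ (c, v @ [GAt {l}]) # map (\<lambda>t. (t, [GAt {l}])) ts) @ (c', [GAt {l}, GAct (last \<rho>)] @ y) # R0"
    using dec_parse[OF d' ps p'] by blast
  define R where "R = map (\<lambda>t. (t, [GAt {l}])) ts @ (c', [GAt {l}, GAct (last \<rho>)] @ y) # R0"
  have psR: "ps = P @ (c, v @ [GAt {l}]) # R" using yR unfolding R_def by simp
  have "cw b0 ps = pre b0 P @ v @ cw {l} R" using cw_call[of b0 P c "v @ [GAt {l}]" R] psR
    lastat_app[of "[GAt {l}]" v] by simp
  moreover have "cw b0 ps = W (\<rho> @ [l])" using ps unfolding pars_def by simp
  moreover have "W (\<rho> @ [l]) = pre b0 P @ v @ [GAt {l}, GAct (last \<rho>), GAt {l}]"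
    using W_snoc[OF ne] d unfolding Dec_def by simp
  ultimately have "cw {l} R = [GAt {l}, GAct (last \<rho>), GAt {l}]" by simp
  then show ?thesis using psR by blast
qed

lemma F2:
  assumes p1: "point \<rho>1" and d1: "Dec \<rho>1 P c v1" and l1: "last \<rho>1 = l"
    and p2: "point \<rho>2" and d2: "Dec \<rho>2 P c v2" and l: "l \<in> {1..k}" "l \<noteq> last \<rho>2"
    and d2': "Dec (\<rho>2 @ [l]) (P @ (c, v2 @ [GAt {l}]) # map (\<lambda>t. (t, [GAt {l}])) ts) c' [GAt {l}, GAct (last \<rho>2)]"
  shows False
proof -
  obtain ps1 where ps1: "pars \<rho>1 ps1" using parse_ex[OF p1] by blast
  obtain R1 where R1: "ps1 = P @ (c, v1 @ [GAt {l}]) # R1" "cw {l} R1 = [GAt {l}]"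
    using stay_end[OF d1 p1 ps1] l1 by blast
  have p2': "point (\<rho>2 @ [l])" using point_snoc[OF p2 l] .
  obtain ps2 where ps2: "pars (\<rho>2 @ [l]) ps2" using parse_ex[OF p2'] by blast
  obtain R2 where R2: "ps2 = P @ (c, v2 @ [GAt {l}]) # R2"
    using exit_parse[OF p2 l d2 d2' ps2] by blast
  have "cw b0 (P @ (c, v2 @ [GAt {l}]) # R1) \<in> L"
    using swap[of b0 P c "v2 @ [GAt {l}]" R2 P "v1 @ [GAt {l}]" R1] ps1 ps2 R1 R2 b0T
      lastat_app[of "[GAt {l}]" v1] lastat_app[of "[GAt {l}]" v2]
    unfolding pars_def by simp
  moreover have "cw b0 (P @ (c, v2 @ [GAt {l}]) # R1) = Q \<rho>2 @ [GAt {l}]"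
    using cw_call[of b0 P c "v2 @ [GAt {l}]" R1] R1(2) lastat_app[of "[GAt {l}]" v2] d2
    unfolding Dec_def by simp
  moreover have "W (\<rho>2 @ [l]) \<in> L" using tang p2' unfolding point_def W_def by blast
  moreover have "W (\<rho>2 @ [l]) = (Q \<rho>2 @ [GAt {l}]) @ [GAct (last \<rho>2), GAt {l}]"
    using W_snoc[OF point_ne[OF p2]] by simp
  ultimately show False using det'_prefix[OF L_det] by (metis list.distinct(1))
qed

lemma F3:
  assumes p1: "point \<rho>1" and d1: "Dec \<rho>1 P c v1" and p2: "point \<rho>2" and d2: "Dec \<rho>2 P c v2"
    and a: "last \<rho>1 \<noteq> last \<rho>2" and l: "l \<in> {1..k}" "l \<noteq> last \<rho>1" "l \<noteq> last \<rho>2"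
    and d1': "Dec (\<rho>1 @ [l]) (P @ (c, v1 @ [GAt {l}]) # map (\<lambda>t. (t, [GAt {l}])) ts1) c1 [GAt {l}, GAct (last \<rho>1)]"
    and d2': "Dec (\<rho>2 @ [l]) (P @ (c, v2 @ [GAt {l}]) # map (\<lambda>t. (t, [GAt {l}])) ts2) c2 [GAt {l}, GAct (last \<rho>2)]"
  shows False
proof -
  have p1': "point (\<rho>1 @ [l])" using point_snoc[OF p1 l(1,2)] .
  have p2': "point (\<rho>2 @ [l])" using point_snoc[OF p2 l(1,3)] .
  obtain ps1 where ps1: "pars (\<rho>1 @ [l]) ps1" using parse_ex[OF p1'] by blast
  obtain ps2 where ps2: "pars (\<rho>2 @ [l]) ps2" using parse_ex[OF p2'] by blast
  obtain R1 where R1: "ps1 = P @ (c, v1 @ [GAt {l}]) # R1"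
    using exit_parse[OF p1 l(1,2) d1 d1' ps1] by blast
  obtain R2 where R2: "ps2 = P @ (c, v2 @ [GAt {l}]) # R2" "cw {l} R2 = [GAt {l}, GAct (last \<rho>2), GAt {l}]"
    using exit_parse[OF p2 l(1,3) d2 d2' ps2] by blast
  have "cw b0 (P @ (c, v1 @ [GAt {l}]) # R2) \<in> L"
    using swap[of b0 P c "v1 @ [GAt {l}]" R1 P "v2 @ [GAt {l}]" R2] ps1 ps2 R1 R2 b0T
      lastat_app[of "[GAt {l}]" v1] lastat_app[of "[GAt {l}]" v2]
    unfolding pars_def by simp
  moreover have "cw b0 (P @ (c, v1 @ [GAt {l}]) # R2) = (Q \<rho>1 @ [GAt {l}]) @ GAct (last \<rho>2) # [GAt {l}]"
    using cw_call[of b0 P c "v1 @ [GAt {l}]" R2] R2(2) lastat_app[of "[GAt {l}]" v1] d1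
    unfolding Dec_def by simp
  moreover have "W (\<rho>1 @ [l]) \<in> L" using tang p1' unfolding point_def W_def by blast
  moreover have "W (\<rho>1 @ [l]) = (Q \<rho>1 @ [GAt {l}]) @ GAct (last \<rho>1) # [GAt {l}]"
    using W_snoc[OF point_ne[OF p1]] by simp
  ultimately show False using det'_act[OF L_det] a by metis
qed

definition exitD where
  "exitD \<rho> P c v l \<longleftrightarrow> (\<exists>ts c'. Dec (\<rho> @ [l]) (P @ (c, v @ [GAt {l}]) # map (\<lambda>t. (t, [GAt {l}])) ts) c' [GAt {l}, GAct (last \<rho>)])"

lemma trans2: "point \<rho> \<Longrightarrow> l \<in> {1..k} \<Longrightarrow> l \<noteq> last \<rho> \<Longrightarrow> Dec \<rho> P c v \<Longrightarrow>
   (\<exists>v'. Dec (\<rho> @ [l]) P c v') \<or> exitD \<rho> P c v l"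
proof -
  assume p: "point \<rho>" and l: "l \<in> {1..k}" "l \<noteq> last \<rho>" and d: "Dec \<rho> P c v"
  obtain P' c' v' where d': "Dec (\<rho> @ [l]) P' c' v'" using dec_ex[OF point_snoc[OF p l]] by blast
  show ?thesis using trans_dec[OF p l d d'] d' unfolding exitD_def by blast
qed

lemma first_exit:
  assumes p: "point \<pi>" and d: "Dec \<pi> P c v"
  shows "\<pi> @ \<sigma> \<in> paths k i0 \<Longrightarrow> \<not> (\<exists>v'. Dec (\<pi> @ \<sigma>) P c v') \<Longrightarrow>
    \<exists>\<sigma>1 v1 l. point (\<pi> @ \<sigma>1) \<and> Dec (\<pi> @ \<sigma>1) P c v1 \<and> l \<in> {1..k} \<and> l \<noteq> last (\<pi> @ \<sigma>1) \<and> exitD (\<pi> @ \<sigma>1) P c v1 l"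
proof (induction \<sigma> rule: rev_induct)
  case Nil then show ?case using d by simp
next
  case (snoc l \<sigma>')
  have ne: "\<pi> @ \<sigma>' \<noteq> []" using point_ne[OF p] by simp
  have pp: "\<pi> @ \<sigma>' \<in> paths k i0 \<and> [l] \<in> paths k (last (\<pi> @ \<sigma>'))"
    using paths_app_D[OF ne _, of "[l]"] snoc.prems(1) by simp
  then have l: "l \<in> {1..k}" "l \<noteq> last (\<pi> @ \<sigma>')" unfolding paths_def by auto
  have p': "point (\<pi> @ \<sigma>')" using point_ext[OF p] pp by simp
  show ?case
  proof (cases "\<exists>v'. Dec (\<pi> @ \<sigma>') P c v'")
    case True
    then obtain v1 where v1: "Dec (\<pi> @ \<sigma>') P c v1" by blast
    have "\<not> (\<exists>v'. Dec ((\<pi> @ \<sigma>') @ [l]) P c v')" using snoc.prems(2) by simp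
    then have "exitD (\<pi> @ \<sigma>') P c v1 l" using trans2[OF p' l v1] by blast
    then show ?thesis using p' v1 l by blast
  next
    case False
    then show ?thesis using snoc.IH pp by blast
  qed
qed

lemma claimD:
  assumes p: "point \<pi>" and d: "Dec \<pi> P c v"
    and ne: "\<exists>\<sigma>. \<pi> @ \<sigma> \<in> paths k i0 \<and> \<not> (\<exists>v'. Dec (\<pi> @ \<sigma>) P c v')"
  shows "\<forall>l'. l' \<in> {1..k} \<longrightarrow> l' \<noteq> last \<pi> \<longrightarrow> exitD \<pi> P c v l'"
proof -
  obtain \<sigma> where "\<pi> @ \<sigma> \<in> paths k i0" "\<not> (\<exists>v'. Dec (\<pi> @ \<sigma>) P c v')" using ne by blast
  then obtain \<sigma>1 v1 l where e: "point (\<pi> @ \<sigma>1)" "Dec (\<pi> @ \<sigma>1) P c v1" "l \<in> {1..k}" "l \<noteq> last (\<pi> @ \<sigma>1)"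
    "exitD (\<pi> @ \<sigma>1) P c v1 l" using first_exit[OF p d] by blast
  define \<rho> where "\<rho> = \<pi> @ \<sigma>1"
  have e': "point \<rho>" "Dec \<rho> P c v1" "l \<noteq> last \<rho>" "exitD \<rho> P c v1 l" using e unfolding \<rho>_def by auto
  obtain ts c' where ex: "Dec (\<rho> @ [l]) (P @ (c, v1 @ [GAt {l}]) # map (\<lambda>t. (t, [GAt {l}])) ts) c' [GAt {l}, GAct (last \<rho>)]"
    using e'(4) unfolding exitD_def by blast
  have lj: "l \<noteq> last \<pi>"
  proof
    assume "l = last \<pi>"
    then show False using F2[OF p d _ e'(1,2) e(3) e'(3) ex] by simp
  qed
  have ja: "last \<pi> = last \<rho>"
  proof (rule ccontr)
    assume ja: "last \<pi> \<noteq> last \<rho>"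
    show False
    proof (cases "\<exists>v'. Dec (\<pi> @ [l]) P c v'")
      case True
      then obtain v' where v': "Dec (\<pi> @ [l]) P c v'" by blast
      show False using F2[OF point_snoc[OF p e(3) lj] v' _ e'(1,2) e(3) e'(3) ex] by simp
    next
      case False
      then have "exitD \<pi> P c v l" using trans2[OF p e(3) lj d] by blast
      then obtain ts1 c1 where ex1: "Dec (\<pi> @ [l]) (P @ (c, v @ [GAt {l}]) # map (\<lambda>t. (t, [GAt {l}])) ts1) c1 [GAt {l}, GAct (last \<pi>)]"
        unfolding exitD_def by blast
      show False using F3[OF p d e'(1,2) ja e(3) lj e'(3) ex1 ex] .
    qed
  qed
  show ?thesis
  proof (intro allI impI)
    fix l' assume l': "l' \<in> {1..k}" "l' \<noteq> last \<pi>"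
    show "exitD \<pi> P c v l'"
    proof (cases "exitD \<pi> P c v l'")
      case True then show ?thesis .
    next
      case False
      then obtain v'' where v'': "Dec (\<pi> @ [l']) P c v''" using trans2[OF p l' d] by blast
      have pl': "point (\<pi> @ [l'])" using point_snoc[OF p l'] .
      show ?thesis
      proof (cases "l' = l")
        case True
        then show ?thesis using F2[OF pl' v'' _ e'(1,2) e(3) e'(3) ex] by simp
      next
        case False
        have ll': "l \<noteq> last (\<pi> @ [l'])" using False by simp
        show ?thesis
        proof (cases "\<exists>v3. Dec ((\<pi> @ [l']) @ [l]) P c v3")
          case True
          then obtain v3 where v3: "Dec ((\<pi> @ [l']) @ [l]) P c v3" by blast
          show ?thesis using F2[OF point_snoc[OF pl' e(3) ll'] v3 _ e'(1,2) e(3) e'(3) ex] by simp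
        next
          case False
          then have "exitD (\<pi> @ [l']) P c v'' l" using trans2[OF pl' e(3) ll' v''] by blast
          then obtain ts3 c3 where ex3: "Dec ((\<pi> @ [l']) @ [l]) (P @ (c, v'' @ [GAt {l}]) # map (\<lambda>t. (t, [GAt {l}])) ts3) c3 [GAt {l}, GAct (last (\<pi> @ [l']))]"
            unfolding exitD_def by blast
          have "last (\<pi> @ [l']) \<noteq> last \<rho>" using l'(2) ja by simp
          then show ?thesis using F3[OF pl' v'' e'(1,2) _ e(3) ll' e'(3) ex3 ex] by simp
        qed
      qed
    qed
  qed
qed

lemma noexit_tangle:
  assumes p: "point \<pi>" and d: "Dec \<pi> P c v"
    and all: "\<forall>\<sigma>. \<pi> @ \<sigma> \<in> paths k i0 \<longrightarrow> (\<exists>v'. Dec (\<pi> @ \<sigma>) P c v')"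
  shows "tangle k (Lc c)"
proof -
  have ne: "\<pi> \<noteq> []" using point_ne[OF p] .
  have "\<forall>xs \<in> paths k (last \<pi>). v @ lk_word (last \<pi>) xs \<in> Lc c"
  proof
    fix xs assume xs: "xs \<in> paths k (last \<pi>)"
    have xne: "xs \<noteq> []" using paths_ne[OF xs] .
    have pa: "\<pi> @ xs \<in> paths k i0" using paths_app p xs unfolding point_def by blast
    have px: "point (\<pi> @ xs)" using point_ext[OF p pa] .
    obtain v' where v': "Dec (\<pi> @ xs) P c v'" using all pa by blast
    obtain ps where ps: "pars (\<pi> @ xs) ps" using parse_ex[OF px] by blast
    obtain R where R: "ps = P @ (c, v' @ [GAt {last (\<pi> @ xs)}]) # R" using stay_end[OF v' px ps] by blast
    have inL: "v' @ [GAt {last xs}] \<in> Lc c" using call_facts[of b0 P c _ R] ps R xne unfolding pars_def by simp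
    have "Q (\<pi> @ xs) = Q \<pi> @ butlast (lk_word (last \<pi>) xs)"
      unfolding Q_def using lk_word_app[OF ne xne, of i0] lk_word_ne[OF xne] by (simp add: butlast_append)
    then have "pre b0 P @ v' = pre b0 P @ v @ butlast (lk_word (last \<pi>) xs)" using v' d unfolding Dec_def by simp
    then have "v' = v @ butlast (lk_word (last \<pi>) xs)" by simp
    then have "v' @ [GAt {last xs}] = v @ lk_word (last \<pi>) xs" using lk_word_last[OF xne, of "last \<pi>"] by simp
    then show "v @ lk_word (last \<pi>) xs \<in> Lc c" using inL by simp
  qed
  then show ?thesis unfolding tangle_def by blast
qed

end

lemma ew_hd: "\<exists>r. ew ab b ps = GAt (ab b) # r"
  by (cases ps) auto

lemma valid_tests: "valid Lc T g (map (\<lambda>t. (t, [GAt g])) ts) \<Longrightarrow> t \<in> set ts \<Longrightarrow> [GAt g] \<in> Lc t"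
  by (induction ts) auto

locale desc2 = desc +
  fixes m n :: nat
  assumes abm: "\<forall>b. ab b \<subseteq> {0..<m}"
    and acts: "\<forall>w\<in>Le. \<forall>c. GAct c \<in> set w \<longrightarrow> c < n"
    and kbig: "2^m * n + 4 \<le> k"
begin

lemma lfacts:
  assumes noex: "\<forall>\<pi> P c v. point \<pi> \<longrightarrow> Dec \<pi> P c v \<longrightarrow> (\<exists>\<sigma>. \<pi> @ \<sigma> \<in> paths k i0 \<and> \<not> (\<exists>v'. Dec (\<pi> @ \<sigma>) P c v'))"
    and l: "l \<in> {1..k}" "l \<noteq> l0"
    and dl: "Dec [l0, l] Pl c1 [GAt {l}, GAct l0]"
    and l': "l' \<in> {1..k}" "l' \<noteq> l"
  shows "\<exists>R. pars [l0, l, l'] (Pl @ (c1, [GAt {l}, GAct l0, GAt {l'}]) # R) \<and> cw {l'} R = [GAt {l'}, GAct l, GAt {l'}]"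
proof -
  have pl: "point [l0, l]" using point_snoc[OF point0 l(1)] l(2) by simp
  have "\<exists>\<sigma>. [l0, l] @ \<sigma> \<in> paths k i0 \<and> \<not> (\<exists>v'. Dec ([l0, l] @ \<sigma>) Pl c1 v')"
    using noex pl dl by blast
  then have "exitD [l0, l] Pl c1 [GAt {l}, GAct l0] l'"
    using claimD[OF pl dl] l' by simp
  then obtain ts c'' where ex: "Dec ([l0, l] @ [l']) (Pl @ (c1, [GAt {l}, GAct l0] @ [GAt {l'}]) # map (\<lambda>t. (t, [GAt {l'}])) ts) c'' [GAt {l'}, GAct (last [l0, l])]"
    unfolding exitD_def by blast
  have p3: "point ([l0, l] @ [l'])" using point_snoc[OF pl l'(1)] l'(2) by simp
  obtain ps where ps: "pars ([l0, l] @ [l']) ps" using parse_ex[OF p3] by blast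
  have "\<exists>R. ps = Pl @ (c1, [GAt {l}, GAct l0] @ [GAt {l'}]) # R \<and> cw {l'} R = [GAt {l'}, GAct (last [l0, l]), GAt {l'}]"
    using exit_parse[OF pl l'(1) _ dl ex ps] l'(2) by simp
  then obtain R where R: "ps = Pl @ (c1, [GAt {l}, GAct l0] @ [GAt {l'}]) # R" "cw {l'} R = [GAt {l'}, GAct (last [l0, l]), GAt {l'}]"
    by blast
  then show ?thesis using ps by auto
qed

theorem descent: "\<exists>c. tangle k (Lc c)"
proof (rule ccontr)
  assume nt: "\<not> (\<exists>c. tangle k (Lc c))"
  have noex: "\<forall>\<pi> P c v. point \<pi> \<longrightarrow> Dec \<pi> P c v \<longrightarrow> (\<exists>\<sigma>. \<pi> @ \<sigma> \<in> paths k i0 \<and> \<not> (\<exists>v'. Dec (\<pi> @ \<sigma>) P c v'))"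
    using noexit_tangle nt by blast
  obtain P c v where d0: "Dec [l0] P c v" using dec_ex[OF point0] by blast
  define S where "S = {1..k} - {l0}"
  have exS: "\<forall>l\<in>S. \<exists>x. Dec [l0, l] (P @ (c, v @ [GAt {l}]) # map (\<lambda>t. (t, [GAt {l}])) (fst x)) (snd x) [GAt {l}, GAct l0]"
  proof
    fix l assume "l \<in> S"
    then have l: "l \<in> {1..k}" "l \<noteq> last [l0]" unfolding S_def by auto
    have "\<exists>\<sigma>. [l0] @ \<sigma> \<in> paths k i0 \<and> \<not> (\<exists>v'. Dec ([l0] @ \<sigma>) P c v')"
      using noex point0 d0 by blast
    then have "exitD [l0] P c v l" using claimD[OF point0 d0] l by simp
    then show "\<exists>x. Dec [l0, l] (P @ (c, v @ [GAt {l}]) # map (\<lambda>t. (t, [GAt {l}])) (fst x)) (snd x) [GAt {l}, GAct l0]"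
      unfolding exitD_def by auto
  qed
  then obtain f where f: "\<forall>l\<in>S. Dec [l0, l] (P @ (c, v @ [GAt {l}]) # map (\<lambda>t. (t, [GAt {l}])) (fst (f l))) (snd (f l)) [GAt {l}, GAct l0]"
    by metis
  define Pl where "Pl l = P @ (c, v @ [GAt {l}]) # map (\<lambda>t. (t, [GAt {l}])) (fst (f l))" for l
  have epre_Pl: "epre ab b0 (Pl l) = epre ab b0 P @ [GAt (ab (endat b0 P)), GAct c] @ concat (map (\<lambda>t. [GAt (ab {l}), GAct t]) (fst (f l)))" for l
    unfolding Pl_def epre_app using lastat_app[of "[GAt {l}]" v] by (simp add: epre_tests)
  have endat_Pl: "endat b0 (Pl l) = {l}" for l
    unfolding Pl_def endat_app using lastat_app[of "[GAt {l}]" v] by (simp add: endat_tests)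
  have pairf: "\<exists>R. pars [l0, l, l'] (Pl l @ (snd (f l), [GAt {l}, GAct l0, GAt {l'}]) # R) \<and> cw {l'} R = [GAt {l'}, GAct l, GAt {l'}]"
    if "l \<in> S" "l' \<in> {1..k}" "l' \<noteq> l" for l l'
    using lfacts[OF noex _ _ _ that(2,3), of "Pl l" "snd (f l)"] that(1) f unfolding S_def Pl_def by auto
  have ewf: "ew ab b0 (Pl l @ (snd (f l), w) # R) = (epre ab b0 P @ [GAt (ab (endat b0 P)), GAct c]) @
      concat (map (\<lambda>t. [GAt (ab {l}), GAct t]) (fst (f l) @ [snd (f l)])) @ ew ab (lastat w) R" for l w R
    using epre_Pl[of l] endat_Pl[of l] unfolding ew_app by simp
  have cn: "snd (f l) < n" if tt: "l \<in> S" "l' \<in> {1..k}" "l' \<noteq> l" for l l'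
  proof -
    obtain R where R: "pars [l0, l, l'] (Pl l @ (snd (f l), [GAt {l}, GAct l0, GAt {l'}]) # R)" using pairf[OF tt] by blast
    then have "ew ab b0 (Pl l @ (snd (f l), [GAt {l}, GAct l0, GAt {l'}]) # R) \<in> Le" unfolding pars_def by simp
    moreover have "GAct (snd (f l)) \<in> set (ew ab b0 (Pl l @ (snd (f l), [GAt {l}, GAct l0, GAt {l'}]) # R))"
      unfolding ewf by simp
    ultimately show ?thesis using acts by blast
  qed
  have cnot: "snd (f l) \<notin> set (fst (f l))" if tt: "l \<in> S" "l' \<in> {1..k}" "l' \<noteq> l" for l l'
  proof
    assume a: "snd (f l) \<in> set (fst (f l))"
    obtain R where R: "pars [l0, l, l'] (Pl l @ (snd (f l), [GAt {l}, GAct l0, GAt {l'}]) # R)" using pairf[OF tt] by blast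
    then have v: "valid Lc T b0 (Pl l @ (snd (f l), [GAt {l}, GAct l0, GAt {l'}]) # R)" unfolding pars_def by simp
    have w1: "[GAt {l}, GAct l0, GAt {l'}] \<in> Lc (snd (f l))" using call_facts[OF v] by blast
    have "valid Lc T b0 (Pl l)" using call_facts[OF v] by simp
    then have "valid Lc T {l} (map (\<lambda>t. (t, [GAt {l}])) (fst (f l)))"
      unfolding Pl_def valid_app using lastat_app[of "[GAt {l}]" v] by simp
    then have "[GAt {l}] \<in> Lc (snd (f l))" using valid_tests a by blast
    then show False using det'_prefix[of "Lc (snd (f l))" "[GAt {l}]" "[GAct l0, GAt {l'}]"] w1 dc by simp
  qed
  have cardS: "card S = k - 1" unfolding S_def using l0 by simp
  define g where "g l = (ab {l}, snd (f l))" for l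
  have gS: "g ` S \<subseteq> Pow {0..<m} \<times> {0..<n}"
  proof
    fix x assume "x \<in> g ` S"
    then obtain l where l: "l \<in> S" "x = g l" by blast
    obtain l' where l': "l' \<in> {1..k}" "l' \<noteq> l"
    proof -
      have "l \<ge> 1" "k \<ge> 2" using l(1) kbig unfolding S_def by auto
      then show ?thesis using that[of "if l = 1 then 2 else 1"] by auto
    qed
    show "x \<in> Pow {0..<m} \<times> {0..<n}" using l cn[OF l(1) l'] abm unfolding g_def by auto
  qed
  have "card (Pow {0..<m::nat} \<times> {0..<n}) = 2^m * n" by (simp add: card_cartesian_product card_Pow)
  then have "\<not> inj_on g S" using card_inj_on_le[OF _ gS] cardS kbig by fastforce
  then obtain l1 l2 where l12: "l1 \<in> S" "l2 \<in> S" "l1 \<noteq> l2" "g l1 = g l2" unfolding inj_on_def by blast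
  have ab12: "ab {l1} = ab {l2}" and c12: "snd (f l1) = snd (f l2)" using l12(4) unfolding g_def by auto
  obtain l' where l': "l' \<in> {1..k}" "l' \<noteq> l0" "l' \<noteq> l1" "l' \<noteq> l2"
  proof -
    have c3: "card {l0, l1, l2} \<le> 3" using card_length[of "[l0, l1, l2]"] by simp
    have "{1..k} - {l0, l1, l2} \<noteq> {}"
    proof
      assume "{1..k} - {l0, l1, l2} = {}"
      then have "{1..k} \<subseteq> {l0, l1, l2}" by blast
      then have "card {1..k} \<le> card {l0, l1, l2}" by (rule card_mono[rotated]) simp
      then show False using c3 kbig by simp
    qed
    then show ?thesis using that by blast
  qed
  obtain R1 where R1: "pars [l0, l1, l'] (Pl l1 @ (snd (f l1), [GAt {l1}, GAct l0, GAt {l'}]) # R1)"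
    "cw {l'} R1 = [GAt {l'}, GAct l1, GAt {l'}]" using pairf[OF l12(1) l'(1,3)] by blast
  obtain R2 where R2: "pars [l0, l2, l'] (Pl l2 @ (snd (f l2), [GAt {l2}, GAct l0, GAt {l'}]) # R2)"
    "cw {l'} R2 = [GAt {l'}, GAct l2, GAt {l'}]" using pairf[OF l12(2) l'(1,4)] by blast
  have ts12: "fst (f l1) = fst (f l2)"
  proof -
    obtain r1 where r1: "ew ab {l'} R1 = GAt (ab {l'}) # r1" using ew_hd by blast
    obtain r2 where r2: "ew ab {l'} R2 = GAt (ab {l'}) # r2" using ew_hd by blast
    have e1: "(epre ab b0 P @ [GAt (ab (endat b0 P)), GAct c]) @ concat (map (\<lambda>t. [GAt (ab {l1}), GAct t]) (fst (f l1) @ [snd (f l1)])) @ GAt (ab {l'}) # r1 \<in> Le"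
      using R1(1) ewf[of l1 "[GAt {l1}, GAct l0, GAt {l'}]" R1] r1 unfolding pars_def by (simp add: lastat_def)
    have e2: "(epre ab b0 P @ [GAt (ab (endat b0 P)), GAct c]) @ concat (map (\<lambda>t. [GAt (ab {l1}), GAct t]) (fst (f l2) @ [snd (f l1)])) @ GAt (ab {l'}) # r2 \<in> Le"
      using R2(1) ewf[of l2 "[GAt {l2}, GAct l0, GAt {l'}]" R2] r2 ab12 c12 unfolding pars_def by (simp add: lastat_def)
    have n1: "snd (f l1) \<notin> set (fst (f l1))" using cnot[OF l12(1) l'(1,3)] .
    have n2: "snd (f l1) \<notin> set (fst (f l2))" using cnot[OF l12(2) l'(1,4)] c12 by simp
    show ?thesis using chain_lemma[OF de e1 e2 n1 n2] .
  qed
  have sw: "cw b0 (Pl l1 @ (snd (f l1), [GAt {l1}, GAct l0, GAt {l'}]) # R2) \<in> L"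
  proof (rule swap[of b0 "Pl l1" "snd (f l1)" "[GAt {l1}, GAct l0, GAt {l'}]" R1 "Pl l2" "[GAt {l2}, GAct l0, GAt {l'}]" R2])
    show "valid Lc T b0 (Pl l1 @ (snd (f l1), [GAt {l1}, GAct l0, GAt {l'}]) # R1)" using R1(1) unfolding pars_def by simp
    show "valid Lc T b0 (Pl l2 @ (snd (f l1), [GAt {l2}, GAct l0, GAt {l'}]) # R2)" using R2(1) c12 unfolding pars_def by simp
    show "ew ab b0 (Pl l2 @ (snd (f l1), [GAt {l2}, GAct l0, GAt {l'}]) # R2) \<in> Le" using R2(1) c12 unfolding pars_def by simp
    show "epre ab b0 (Pl l1) = epre ab b0 (Pl l2)" using epre_Pl[of l1] epre_Pl[of l2] ab12 ts12 by simp
    show "ab (endat b0 (Pl l1)) = ab (endat b0 (Pl l2))" using endat_Pl ab12 by simp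
    show "lastat [GAt {l1}, GAct l0, GAt {l'}] = lastat [GAt {l2}, GAct l0, GAt {l'}]" by (simp add: lastat_def)
    show "b0 \<subseteq> T" using b0T .
  qed
  have Q1: "pre b0 (Pl l1) @ [GAt {l1}, GAct l0] = Q [l0, l1]" using f l12(1) unfolding Pl_def Dec_def by simp
  have "cw b0 (Pl l1 @ (snd (f l1), [GAt {l1}, GAct l0, GAt {l'}]) # R2) = (Q [l0, l1] @ [GAt {l'}]) @ GAct l2 # [GAt {l'}]"
    using cw_call[of b0 "Pl l1" "snd (f l1)" "[GAt {l1}, GAct l0, GAt {l'}]" R2] R2(2) Q1 by (simp add: lastat_def)
  moreover have "W [l0, l1, l'] \<in> L" using R1(1) pars_L unfolding pars_def by metis
  moreover have "W [l0, l1, l'] = (Q [l0, l1] @ [GAt {l'}]) @ GAct l1 # [GAt {l'}]"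
    using W_snoc[of "[l0, l1]" l'] by simp
  ultimately show False using det'_act[OF L_det] sw l12(3) by metis
qed

end

fun absym :: "('t set \<Rightarrow> nat set) \<Rightarrow> ('p,'t) gsym \<Rightarrow> ('p, nat) gsym" where
  "absym ab (GAt a) = GAt (ab a)" | "absym ab (GAct p) = GAct p"

lemma apply_t_char:
  assumes "\<forall>a. GAt a \<in> set w \<longrightarrow> a \<subseteq> {0..<m}"
    and abdef: "\<forall>\<beta>. ab \<beta> = {t. t < m \<and> beval \<beta> (tt t)}"
  shows "list_all2 (tsym_rel {0..<m} T tt) w w' \<longleftrightarrow> (w = map (absym ab) w' \<and> (\<forall>a. GAt a \<in> set w' \<longrightarrow> a \<subseteq> T))"
  using assms(1)
proof (induction w arbitrary: w')
  case Nil then show ?case by auto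
next
  case (Cons x w)
  show ?case
  proof (cases w')
    case Nil then show ?thesis by simp
  next
    case (Cons x' w'')
    have IH: "list_all2 (tsym_rel {0..<m} T tt) w w'' \<longleftrightarrow> (w = map (absym ab) w'' \<and> (\<forall>a. GAt a \<in> set w'' \<longrightarrow> a \<subseteq> T))"
      using Cons.IH Cons.prems by simp
    have hx: "tsym_rel {0..<m} T tt x x' \<longleftrightarrow> (x = absym ab x' \<and> (\<forall>a. x' = GAt a \<longrightarrow> a \<subseteq> T))"
    proof (cases x; cases x')
      fix \<alpha> \<beta> assume xa: "x = GAt \<alpha>" and xb: "x' = GAt \<beta>"
      have am: "\<alpha> \<subseteq> {0..<m}" using Cons.prems xa by simp
      have abb: "ab \<beta> = {t. t < m \<and> beval \<beta> (tt t)}" using abdef by simp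
      have "tconsistent {0..<m} tt \<alpha> \<beta> \<longleftrightarrow> \<alpha> = ab \<beta>"
        unfolding tconsistent_def abb using am by auto
      then show ?thesis using xa xb by auto
    qed auto
    show ?thesis using IH hx Cons by auto
  qed
qed

fun ewc :: "'t set \<Rightarrow> ('p,'t) parse \<Rightarrow> (nat,'t) gstring" where
  "ewc b [] = [GAt b]"
| "ewc b ((c,w)#ps) = GAt b # GAct c # ewc (lastat w) ps"

fun valid0 :: "(nat \<Rightarrow> ('p,'t) glang) \<Rightarrow> 't set \<Rightarrow> ('p,'t) parse \<Rightarrow> bool" where
  "valid0 s b [] = True"
| "valid0 s b ((c,w)#ps) = (w \<in> s c \<and> w \<noteq> [] \<and> hd w = GAt b \<and> last w = GAt (lastat w) \<and> valid0 s (lastat w) ps)"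

lemma ewc_hd: "\<exists>r. ewc b ps = GAt b # r"
  by (cases ps) auto

lemma cw_hd0: "valid0 s b ps \<Longrightarrow> cw b ps \<noteq> [] \<and> hd (cw b ps) = GAt b"
proof (induction ps arbitrary: b)
  case Nil then show ?case by simp
next
  case (Cons z ps)
  obtain c w where z: "z = (c, w)" by (cases z)
  have v: "w \<in> s c" "w \<noteq> []" "hd w = GAt b" "last w = GAt (lastat w)" "valid0 s (lastat w) ps" using Cons.prems z by auto
  have IH: "cw (lastat w) ps \<noteq> [] \<and> hd (cw (lastat w) ps) = GAt (lastat w)" using Cons.IH[OF v(5)] .
  show ?case
  proof (cases "butlast w = []")
    case True
    then have "w = [last w]" using v(2) by (metis append_butlast_last_id append_self_conv2)
    then have "hd w = last w" by (metis list.sel(1))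
    then show ?thesis using z True IH v by simp
  next
    case False
    then have "hd (butlast w) = GAt b" using v(2,3) by (metis append_butlast_last_id hd_append2)
    then show ?thesis using z False IH by simp
  qed
qed

lemma subst_char: "x \<in> subst_gs s w' \<longleftrightarrow> (\<exists>b ps. x = cw b ps \<and> w' = ewc b ps \<and> valid0 s b ps)"
proof (induction s w' arbitrary: x rule: subst_gs.induct)
  case (1 s a)
  show ?case
  proof
    assume "x \<in> subst_gs s [GAt a]"
    then show "\<exists>b ps. x = cw b ps \<and> [GAt a] = ewc b ps \<and> valid0 s b ps"
      by (intro exI[of _ a] exI[of _ "[]"]) simp
  next
    assume "\<exists>b ps. x = cw b ps \<and> [GAt a] = ewc b ps \<and> valid0 s b ps"
    then obtain b ps where "x = cw b ps" "[GAt a] = ewc b ps" by blast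
    then show "x \<in> subst_gs s [GAt a]" by (cases ps) auto
  qed
next
  case (2 s a p w)
  show ?case
  proof
    assume "x \<in> subst_gs s (GAt a # GAct p # w)"
    then have "x \<in> gdiam (gdiam {[GAt a]} (s p)) (subst_gs s w)" by simp
    then obtain x1 z where xz: "x = butlast x1 @ z" "x1 \<in> gdiam {[GAt a]} (s p)" "z \<in> subst_gs s w" "x1 \<noteq> []" "z \<noteq> []" "last x1 = hd z"
      unfolding gdiam_iff[of x] by blast
    then have x1: "x1 \<in> s p" "hd x1 = GAt a" unfolding gdiam_iff by auto
    obtain b' ps' where bp: "z = cw b' ps'" "w = ewc b' ps'" "valid0 s b' ps'" using 2 xz(3) by blast
    have "hd z = GAt b'" using cw_hd0[OF bp(3)] bp(1) by simp
    then have lx1: "last x1 = GAt b'" "lastat x1 = b'" using xz(6) unfolding lastat_def by auto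
    have e1: "x = cw a ((p, x1) # ps')" using xz(1) bp(1) lx1(2) by simp
    have e2: "GAt a # GAct p # w = ewc a ((p, x1) # ps')" using bp(2) lx1(2) by simp
    have e3: "valid0 s a ((p, x1) # ps')" using x1 xz(4) lx1 bp(3) by simp
    show "\<exists>b ps. x = cw b ps \<and> GAt a # GAct p # w = ewc b ps \<and> valid0 s b ps"
      using e1 e2 e3 by blast
  next
    assume "\<exists>b ps. x = cw b ps \<and> GAt a # GAct p # w = ewc b ps \<and> valid0 s b ps"
    then obtain b ps where bp: "x = cw b ps" "GAt a # GAct p # w = ewc b ps" "valid0 s b ps" by blast
    then obtain x1 ps' where ps: "ps = (p, x1) # ps'" "b = a" "w = ewc (lastat x1) ps'" by (cases ps) auto
    have v: "x1 \<in> s p" "x1 \<noteq> []" "hd x1 = GAt a" "last x1 = GAt (lastat x1)" "valid0 s (lastat x1) ps'"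
      using bp(3) ps by auto
    have zin: "cw (lastat x1) ps' \<in> subst_gs s w" using 2 ps(3) v(5) by blast
    have hz: "cw (lastat x1) ps' \<noteq> [] \<and> hd (cw (lastat x1) ps') = GAt (lastat x1)" using cw_hd0[OF v(5)] .
    have "x1 \<in> gdiam {[GAt a]} (s p)" unfolding gdiam_iff using v by (intro exI[of _ "[GAt a]"] exI[of _ x1]) auto
    then have "butlast x1 @ cw (lastat x1) ps' \<in> gdiam (gdiam {[GAt a]} (s p)) (subst_gs s w)"
      unfolding gdiam_iff[of "butlast x1 @ cw (lastat x1) ps'"]
      using zin hz v(2,4) by (intro exI[of _ x1] exI[of _ "cw (lastat x1) ps'"]) simp
    then have "butlast x1 @ cw (lastat x1) ps' \<in> subst_gs s (GAt a # GAct p # w)" by simp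
    then show "x \<in> subst_gs s (GAt a # GAct p # w)" using bp(1) ps by simp
  qed
next
  case ("3_1" s)
  have "\<forall>b ps. [] \<noteq> ewc b ps" using ewc_hd by (metis list.distinct(1))
  then show ?case by auto
next
  case ("3_2" s vb va)
  have "\<forall>b ps. GAct vb # va \<noteq> ewc b ps" using ewc_hd by (metis gsym.distinct(1) list.inject)
  then show ?case by auto
next
  case ("3_3" s va vb vc)
  have "\<forall>b ps. GAct va # vb # vc \<noteq> ewc b ps" using ewc_hd by (metis gsym.distinct(1) list.inject)
  then show ?case by auto
next
  case ("3_4" s v va vc)
  have "\<forall>b ps. v # GAt va # vc \<noteq> ewc b ps"
  proof (intro allI)
    fix b ps show "v # GAt va # vc \<noteq> ewc b ps"
      by (cases ps) auto
  qed
  then show ?case by auto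
qed

lemma map_absym_ewc: "map (absym ab) (ewc b ps) = ew ab b ps"
  by (induction ps arbitrary: b) auto

lemma ew_act: "(c, w) \<in> set ps \<Longrightarrow> GAct c \<in> set (ew ab b ps)"
  by (induction ps arbitrary: b) auto

lemma valid0_valid: "(\<forall>c w. (c, w) \<in> set ps \<longrightarrow> c < n) \<Longrightarrow> \<forall>L\<in>set Ls. \<forall>w\<in>L. is_gs S T w \<Longrightarrow> length Ls = n \<Longrightarrow>
   valid0 (\<lambda>i. Ls ! i) b ps \<Longrightarrow> valid (\<lambda>c. if c < n then Ls ! c else {}) T b ps"
proof (induction ps arbitrary: b)
  case Nil then show ?case by simp
next
  case (Cons z ps)
  obtain c w where z: "z = (c, w)" by (cases z)
  have cn: "c < n" using Cons.prems(1) z by auto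
  have w: "w \<in> Ls ! c" "hd w = GAt b" "valid0 (\<lambda>i. Ls ! i) (lastat w) ps" using Cons.prems(4) z by auto
  have "Ls ! c \<in> set Ls" using cn Cons.prems(3) by simp
  then have "is_gs S T w" using Cons.prems(2) w(1) by blast
  then have "is_gs UNIV T w" using is_gs_mono by blast
  moreover have "valid (\<lambda>c. if c < n then Ls ! c else {}) T (lastat w) ps"
    using Cons.IH[OF _ Cons.prems(2,3) w(3)] Cons.prems(1) by auto
  ultimately show ?case using z cn w by simp
qed

lemma valid_valid0: "valid (\<lambda>c. if c < n then Ls ! c else {}) T b ps \<Longrightarrow> b \<subseteq> T \<Longrightarrow>
   valid0 (\<lambda>i. Ls ! i) b ps \<and> (\<forall>a. GAt a \<in> set (ewc b ps) \<longrightarrow> a \<subseteq> T)"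
proof (induction ps arbitrary: b)
  case Nil then show ?case by simp
next
  case (Cons z ps)
  obtain c w where z: "z = (c, w)" by (cases z)
  have v: "w \<in> (if c < n then Ls ! c else {})" "is_gs UNIV T w" "hd w = GAt b"
    "valid (\<lambda>c. if c < n then Ls ! c else {}) T (lastat w) ps" using Cons.prems(1) z by auto
  have wL: "w \<in> Ls ! c" using v(1) by (cases "c < n") auto
  have lw: "last w = GAt (lastat w)" "lastat w \<subseteq> T" using is_gs_ne[OF v(2)] unfolding lastat_def by auto
  have IH: "valid0 (\<lambda>i. Ls ! i) (lastat w) ps \<and> (\<forall>a. GAt a \<in> set (ewc (lastat w) ps) \<longrightarrow> a \<subseteq> T)"
    using Cons.IH[OF v(4) lw(2)] .
  have "w \<noteq> []" using is_gs_ne[OF v(2)] by simp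
  then show ?case using z wL v(3) lw(1) IH Cons.prems(2) by auto
qed

lemma op_char:
  assumes kacts: "kacts e \<subseteq> {0..<n}" and gs: "\<forall>L\<in>set Ls. \<forall>w\<in>L. is_gs S T w" and lenLs: "length Ls = n"
  shows "op_apply T (n, m, e) Ls bs = {cw b ps | b ps. b \<subseteq> T \<and> valid (\<lambda>c. if c < n then Ls ! c else {}) T b ps
     \<and> ew (\<lambda>\<beta>. {t. t < m \<and> beval \<beta> (bs ! t)}) b ps \<in> langK {0..<m} e}"
    (is "_ = ?R")
proof -
  define ab where "ab = (\<lambda>\<beta>. {t. t < m \<and> beval \<beta> (bs ! t)})"
  define Lc where "Lc = (\<lambda>c. if c < n then Ls ! c else {})"
  define Le where "Le = langK {0..<m} e"
  have abdef: "\<forall>\<beta>. ab \<beta> = {t. t < m \<and> beval \<beta> (bs ! t)}" unfolding ab_def by simp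
  have Legs: "w \<in> Le \<Longrightarrow> is_gs (kacts e) {0..<m} w" for w unfolding Le_def using langK_gs by blast
  have key: "x \<in> op_apply T (n, m, e) Ls bs \<longleftrightarrow>
     (\<exists>b ps. x = cw b ps \<and> valid0 (\<lambda>i. Ls ! i) b ps \<and> ew ab b ps \<in> Le \<and> (\<forall>a. GAt a \<in> set (ewc b ps) \<longrightarrow> a \<subseteq> T))" for x
  proof -
    have op: "op_apply T (n, m, e) Ls bs = apply_s (\<lambda>i. Ls ! i) (apply_t {0..<m} T (\<lambda>j. bs ! j) Le)"
      unfolding op_apply_def Le_def by simp
    have at: "w' \<in> apply_t {0..<m} T (\<lambda>j. bs ! j) Le \<longleftrightarrow> (map (absym ab) w' \<in> Le \<and> (\<forall>a. GAt a \<in> set w' \<longrightarrow> a \<subseteq> T))" for w'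
    proof
      assume "w' \<in> apply_t {0..<m} T (\<lambda>j. bs ! j) Le"
      then obtain w where w: "w \<in> Le" "list_all2 (tsym_rel {0..<m} T (\<lambda>j. bs ! j)) w w'"
        unfolding apply_t_def by blast
      have "\<forall>a. GAt a \<in> set w \<longrightarrow> a \<subseteq> {0..<m}" using is_gs_atom[OF Legs[OF w(1)]] by blast
      then have "w = map (absym ab) w' \<and> (\<forall>a. GAt a \<in> set w' \<longrightarrow> a \<subseteq> T)"
        using apply_t_char[OF _ abdef] w(2) by blast
      then show "map (absym ab) w' \<in> Le \<and> (\<forall>a. GAt a \<in> set w' \<longrightarrow> a \<subseteq> T)" using w(1) by simp
    next
      assume a: "map (absym ab) w' \<in> Le \<and> (\<forall>a. GAt a \<in> set w' \<longrightarrow> a \<subseteq> T)"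
      have "\<forall>a. GAt a \<in> set (map (absym ab) w') \<longrightarrow> a \<subseteq> {0..<m}" using is_gs_atom[OF Legs] a by blast
      then have "list_all2 (tsym_rel {0..<m} T (\<lambda>j. bs ! j)) (map (absym ab) w') w'"
        using apply_t_char[OF _ abdef, of "map (absym ab) w'" T w'] a by blast
      then show "w' \<in> apply_t {0..<m} T (\<lambda>j. bs ! j) Le" unfolding apply_t_def using a by blast
    qed
    show ?thesis
    proof
      assume "x \<in> op_apply T (n, m, e) Ls bs"
      then obtain w' where w': "w' \<in> apply_t {0..<m} T (\<lambda>j. bs ! j) Le" "x \<in> subst_gs (\<lambda>i. Ls ! i) w'"
        unfolding op apply_s_def by blast
      obtain b ps where bp: "x = cw b ps" "w' = ewc b ps" "valid0 (\<lambda>i. Ls ! i) b ps"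
        using w'(2) unfolding subst_char by blast
      have "ew ab b ps \<in> Le" "\<forall>a. GAt a \<in> set (ewc b ps) \<longrightarrow> a \<subseteq> T"
        using w'(1) bp(2) unfolding at by (auto simp: map_absym_ewc)
      then show "\<exists>b ps. x = cw b ps \<and> valid0 (\<lambda>i. Ls ! i) b ps \<and> ew ab b ps \<in> Le \<and> (\<forall>a. GAt a \<in> set (ewc b ps) \<longrightarrow> a \<subseteq> T)"
        using bp by blast
    next
      assume "\<exists>b ps. x = cw b ps \<and> valid0 (\<lambda>i. Ls ! i) b ps \<and> ew ab b ps \<in> Le \<and> (\<forall>a. GAt a \<in> set (ewc b ps) \<longrightarrow> a \<subseteq> T)"
      then obtain b ps where bp: "x = cw b ps" "valid0 (\<lambda>i. Ls ! i) b ps" "ew ab b ps \<in> Le" "\<forall>a. GAt a \<in> set (ewc b ps) \<longrightarrow> a \<subseteq> T"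
        by blast
      have "ewc b ps \<in> apply_t {0..<m} T (\<lambda>j. bs ! j) Le" unfolding at map_absym_ewc using bp(3,4) by blast
      moreover have "x \<in> subst_gs (\<lambda>i. Ls ! i) (ewc b ps)" unfolding subst_char using bp(1,2) by blast
      ultimately show "x \<in> op_apply T (n, m, e) Ls bs" unfolding op apply_s_def by blast
    qed
  qed
  have setc: "\<And>x. x \<in> ?R \<longleftrightarrow> (\<exists>b ps. x = cw b ps \<and> b \<subseteq> T \<and> valid Lc T b ps \<and> ew ab b ps \<in> Le)"
    unfolding Lc_def ab_def Le_def by (simp only: mem_Collect_eq)
  show ?thesis
  proof (intro set_eqI iffI)
    fix x assume xin: "x \<in> op_apply T (n, m, e) Ls bs"
    have "\<exists>b ps. x = cw b ps \<and> valid0 (\<lambda>i. Ls ! i) b ps \<and> ew ab b ps \<in> Le \<and> (\<forall>a. GAt a \<in> set (ewc b ps) \<longrightarrow> a \<subseteq> T)"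
      using iffD1[OF key[of x] xin] .
    then obtain b ps where bp: "x = cw b ps" "valid0 (\<lambda>i. Ls ! i) b ps" "ew ab b ps \<in> Le" "\<forall>a. GAt a \<in> set (ewc b ps) \<longrightarrow> a \<subseteq> T"
      by blast
    have cn: "\<forall>c w. (c, w) \<in> set ps \<longrightarrow> c < n"
    proof (intro allI impI)
      fix c w assume "(c, w) \<in> set ps"
      then have "GAct c \<in> set (ew ab b ps)" by (rule ew_act)
      then have "c \<in> kacts e" using is_gs_act[OF Legs[OF bp(3)]] by blast
      then show "c < n" using kacts by auto
    qed
    obtain r where "ewc b ps = GAt b # r" using ewc_hd by blast
    then have "GAt b \<in> set (ewc b ps)" by simp
    then have bT: "b \<subseteq> T" using bp(4) by blast
    have vv: "valid Lc T b ps" unfolding Lc_def using valid0_valid[OF cn gs lenLs bp(2)] .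
    show "x \<in> ?R" unfolding setc using bp(1,3) bT vv by (intro exI[of _ b] exI[of _ ps]) simp
  next
    fix x assume "x \<in> ?R"
    then obtain b ps where bp: "x = cw b ps" "b \<subseteq> T" "valid Lc T b ps" "ew ab b ps \<in> Le"
      unfolding setc by blast
    have "valid0 (\<lambda>i. Ls ! i) b ps \<and> (\<forall>a. GAt a \<in> set (ewc b ps) \<longrightarrow> a \<subseteq> T)"
      using valid_valid0[of n Ls T b ps] bp(2,3) unfolding Lc_def by blast
    then show "x \<in> op_apply T (n, m, e) Ls bs" using key bp by blast
  qed
qed

lemma short_no_tangle: "\<forall>w\<in>L. length w \<le> 3 \<Longrightarrow> 2 \<le> k \<Longrightarrow> \<not> tangle k L"
proof
  assume sh: "\<forall>w\<in>L. length w \<le> 3" and k: "2 \<le> k" and "tangle k L"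
  then obtain u i0 where t: "\<forall>xs \<in> paths k i0. u @ lk_word i0 xs \<in> L" unfolding tangle_def by blast
  define l where "l = (if i0 = 1 then 2 else (1::nat))"
  define l' where "l' = (if l = 1 then 2 else (1::nat))"
  have "[l, l'] \<in> paths k i0" unfolding paths_def l_def l'_def using k by auto
  then have "u @ lk_word i0 [l, l'] \<in> L" using t by blast
  moreover have "length (u @ lk_word i0 [l, l']) = length u + 5" by simp
  ultimately show False using sh by fastforce
qed

lemma det'_act_lang: "det' (langK T (KAct p))"
  unfolding det'_def diverge_def
proof (intro ballI impI)
  fix w w' assume w: "w \<in> langK T (KAct p)" and w': "w' \<in> langK T (KAct p)" and ne: "w \<noteq> w'"
  obtain a b where ab: "w = [GAt a, GAct p, GAt b]" using w by auto
  obtain a' b' where ab': "w' = [GAt a', GAct p, GAt b']" using w' by auto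
  show "\<exists>q a a' s s'. a \<noteq> a' \<and> w = q @ GAt a # s \<and> w' = q @ GAt a' # s'"
  proof (cases "a = a'")
    case True
    then have "b \<noteq> b'" using ne ab ab' by auto
    then show ?thesis using ab ab' True by (intro exI[of _ "[GAt a, GAct p]"]) auto
  next
    case False
    then show ?thesis using ab ab' by (intro exI[of _ "[]"]) auto
  qed
qed

lemma det'_test_lang: "det' (langK T (KTest b))"
  unfolding det'_def diverge_def
proof (intro ballI impI)
  fix w w' assume w: "w \<in> langK T (KTest b)" and w': "w' \<in> langK T (KTest b)" and ne: "w \<noteq> w'"
  obtain a where a: "w = [GAt a]" using w by auto
  obtain a' where a': "w' = [GAt a']" using w' by auto
  show "\<exists>q a a' s s'. a \<noteq> a' \<and> w = q @ GAt a # s \<and> w' = q @ GAt a' # s'"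
    using a a' ne by (intro exI[of _ "[]"]) auto
qed

lemma Lk_tangle: "tangle k (Lk k)"
  unfolding tangle_def
proof (intro exI[of _ "[]"] exI[of _ "1::nat"] ballI)
  fix xs assume "xs \<in> paths k 1"
  then show "[] @ lk_word 1 xs \<in> Lk k" unfolding paths_def Lk_def by auto
qed

theorem theorem6p2:
  fixes Ops :: "opcode set"
  assumes "finite Ops"
    and "\<forall>c\<in>Ops. rcfo c"
  shows "\<exists>k>0. Lk k \<notin> generated {1..k} {1..k} Ops"
proof -
  define K where "K = (\<Sum>c\<in>Ops. 2 ^ (fst (snd c)) * fst c)"
  define k where "k = K + 4"
  have bound: "2 ^ m * n \<le> K" if "(n, m, e) \<in> Ops" for n m e
  proof -
    have "2 ^ (fst (snd (n, m, e))) * fst (n, m, e) \<le> K"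
      unfolding K_def using member_le_sum[OF that _ assms(1), of "\<lambda>c. 2 ^ (fst (snd c)) * fst c"] by simp
    then show ?thesis by simp
  qed
  have inv: "L \<in> generated {1..k} {1..k} Ops \<Longrightarrow> det' L \<and> \<not> tangle k L" for L
  proof (induction rule: generated.induct)
    case (gen_act p)
    have "\<forall>w\<in>langK {1..k} (KAct p). length w \<le> 3" by auto
    then have "\<not> tangle k (langK {1..k} (KAct p))" using short_no_tangle[of "langK {1..k} (KAct p)" k] unfolding k_def by simp
    moreover have "det' (langK {1..k} (KAct p))" by (rule det'_act_lang)
    ultimately show ?case by simp
  next
    case (gen_test b)
    have "\<forall>w\<in>langK {1..k} (KTest b). length w \<le> 3" by auto
    then have "\<not> tangle k (langK {1..k} (KTest b))" using short_no_tangle[of "langK {1..k} (KTest b)" k] unfolding k_def by simp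
    moreover have "det' (langK {1..k} (KTest b))" by (rule det'_test_lang)
    ultimately show ?case by simp
  next
    case (gen_op n m e Ls bs)
    define T :: "nat set" where "T = {1..k}"
    have IH: "\<forall>L\<in>set Ls. det' L \<and> \<not> tangle k L \<and> (\<forall>w\<in>L. is_gs {1..k} {1..k} w)"
    proof
      fix L assume L: "L \<in> set Ls"
      then have a: "(L \<in> generated {1..k} {1..k} Ops \<and> det' L \<and> \<not> tangle k L) \<and> L \<in> Greg {1..k} {1..k}"
        using gen_op.IH by blast
      then have "\<forall>w\<in>L. is_gs {1..k} {1..k} w" unfolding Greg_def by (simp only: mem_Collect_eq) blast
      then show "det' L \<and> \<not> tangle k L \<and> (\<forall>w\<in>L. is_gs {1..k} {1..k} w)" using a by simp
    qed
    have rc: "kacts e \<subseteq> {0..<n}" "deterministic (langK {0..<m} e)" using assms(2) \<open>(n, m, e) \<in> Ops\<close> unfolding rcfo_def by auto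
    define Lc where "Lc = (\<lambda>c. if c < n then Ls ! c else {})"
    define ab where "ab = (\<lambda>\<beta>. {t. t < m \<and> beval \<beta> (bs ! t)})"
    define Le where "Le = langK {0..<m} e"
    define L' where "L' = op_apply {1..k} (n, m, e) Ls bs"
    have L'def: "L' = {cw b ps | b ps. b \<subseteq> {1..k} \<and> valid Lc {1..k} b ps \<and> ew ab b ps \<in> Le}"
      unfolding L'_def Lc_def ab_def Le_def
      using op_char[OF rc(1), of Ls "{1..k}" "{1..k}" m bs] IH \<open>length Ls = n\<close> by blast
    have dLc: "\<forall>c. det' (Lc c)"
    proof
      fix c show "det' (Lc c)"
      proof (cases "c < n")
        case True
        then have "Ls ! c \<in> set Ls" using \<open>length Ls = n\<close> by simp
        then show ?thesis using IH True unfolding Lc_def by simp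
      next
        case False then show ?thesis unfolding Lc_def using det'_empty by simp
      qed
    qed
    have dLe: "det' Le" unfolding Le_def using deterministic_det'[OF rc(2)] .
    interpret cmp: comp Lc "{1..k}" ab Le L'
      by unfold_locales (fact dLc dLe L'def)+
    have nt: "\<not> tangle k L'"
    proof
      assume "tangle k L'"
      then obtain u i0 where t: "\<forall>xs \<in> paths k i0. u @ lk_word i0 xs \<in> L'" unfolding tangle_def by blast
      define l0 where "l0 = (if i0 = 1 then 2 else (1::nat))"
      have l0: "l0 \<in> {1..k}" "l0 \<noteq> i0" unfolding l0_def k_def by auto
      have abm: "\<forall>b. ab b \<subseteq> {0..<m}" unfolding ab_def by auto
      have acts: "\<forall>w\<in>Le. \<forall>c. GAct c \<in> set w \<longrightarrow> c < n"
      proof (intro ballI allI impI)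
        fix w c assume wl: "w \<in> Le" and wc: "GAct c \<in> set w"
        have wl': "w \<in> langK {0..<m} e" using wl unfolding Le_def .
        have "is_gs (kacts e) {0..<m} w" by (rule langK_gs[OF wl'])
        then have "c \<in> kacts e" by (rule is_gs_act[OF _ wc])
        then show "c < n" using rc(1) by auto
      qed
      have kbig: "2 ^ m * n + 4 \<le> k" using bound[OF \<open>(n, m, e) \<in> Ops\<close>] unfolding k_def by simp
      interpret d: desc2 Lc "{1..k}" ab Le L' k u i0 l0 m n
        by unfold_locales (fact dLc dLe L'def t l0(1) l0(2) abm acts kbig)+
      obtain c where tc: "tangle k (Lc c)" using d.descent by blast
      show False
      proof (cases "c < n")
        case True
        then have "Ls ! c \<in> set Ls" using \<open>length Ls = n\<close> by simp
        then have "\<not> tangle k (Ls ! c)" using IH by blast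
        then show False using tc True unfolding Lc_def by simp
      next
        case False
        then show False using tc short_no_tangle[of "{}" k] unfolding Lc_def k_def by simp
      qed
    qed
    show ?case using cmp.L_det nt unfolding L'_def by simp
  qed
  have "Lk k \<notin> generated {1..k} {1..k} Ops" using inv Lk_tangle by blast
  moreover have "k > 0" unfolding k_def by simp
  ultimately show ?thesis by blast
qed

end
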